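(* Let $C$ be a convex body in the plane accessible only through a separation oracle, and let $P$ be a set of $n$ points in the plane. The classification algorithm for reverse emptiness (described in the context) performs $O\bigl(|F_{\mathrm{in}}|\log n\bigr)$ oracle queries. The algorithm correctly verifies that $P\cap C=P$ or finds a witness point of $P$ outside $C$.
   Context: Separation oracle: given $q\in\mathbb{R}^2$, it either reports $q\in C$ or returns a line separating $q$ from $C$. The inner fence $F_{\mathrm{in}}$ of $P$ is a closed convex polygon with the minimum number of vertices such that $F_{\mathrm{in}}\subseteq C$ and $C\cap P=F_{\mathrm{in}}\cap P$; $|F_{\mathrm{in}}|$ denotes its number of vertices. Algorithm: let $D=\mathrm{CH}(P)$, let $v,v'\in P$ be the leftmost and rightmost vertices of $D$, and $v_1,v_2$ (resp. $v'_1,v'_2$) the vertices of $D$ adjacent to $v$ (resp. $v'$). Query these six points; if any is outside, halt and report it. Otherwise handle the points above the segment $vv'$ as follows (the points below are handled symmetrically). Let $D^+$ be the part of the boundary chain of $D$ above $vv'$ between the vertical lines through $v$ and $v'$, with edges $e_1,\dots,e_k$ in clockwise order from $v$ to $v'$; for $i<j$ let $D[i,j]$ be the chain of edges $e_i,\dots,e_j$. A recursive call $(i,j)$ (starting with $(1,k)$) must verify that the points of $P$ below $D[i,j]$ are in $C$: let $\ell_i,\ell_j$ be the lines through $e_i,e_j$ and $q=\ell_i\cap\ell_j$; query $q$. If $q\in C$, all points of $P$ below $D[i,j]$ are classified inside and the call returns. Otherwise let $m=\lfloor (i+j)/2\rfloor$ and $e_m=(x,y)$; query $x$ and $y$; if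 either is outside, report it as a witness; otherwise recurse on $(i,m)$ and $(m,j)$. *)

theory Defs
  imports "HOL-Analysis.Analysis"
begin

type_synonym pt = "real \<times> real"

definition cross2 :: "pt \<Rightarrow> pt \<Rightarrow> real" where
  "cross2 a b = fst a * snd b - snd a * fst b"

definition lexless :: "pt \<Rightarrow> pt \<Rightarrow> bool" where
  "lexless a b \<longleftrightarrow> fst a < fst b \<or> (fst a = fst b \<and> snd a < snd b)"

definition hull_vertices :: "pt set \<Rightarrow> pt set" where
  "hull_vertices P = {x. x extreme_point_of (convex hull P)}"

definition leftmost :: "pt set \<Rightarrow> pt" where
  "leftmost P = (THE x. x \<in> hull_vertices P \<and> (\<forall>y\<in>hull_vertices P. y \<noteq> x \<longrightarrow> lexless x y))"

definition rightmost :: "pt set \<Rightarrow> pt" where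
  "rightmost P = (THE x. x \<in> hull_vertices P \<and> (\<forall>y\<in>hull_vertices P. y \<noteq> x \<longrightarrow> lexless y x))"

text \<open>The upper chain D+ as its vertex list w_0 = v, ..., w_k = v' in clockwise
  order (= lexicographic order); edge e_i joins w_(i-1) and w_i.\<close>
definition upper_chain :: "pt set \<Rightarrow> pt list" where
  "upper_chain P = (THE w. sorted_wrt lexless w \<and>
     set w = {u \<in> hull_vertices P. u = leftmost P \<or> u = rightmost P \<or>
                 cross2 (rightmost P - leftmost P) (u - leftmost P) > 0})"

definition line_inter :: "pt \<Rightarrow> pt \<Rightarrow> pt \<Rightarrow> pt \<Rightarrow> pt" where
  "line_inter a b c d = a + (cross2 (c - a) (d - c) / cross2 (b - a) (d - c)) *\<^sub>R (b - a)"

text \<open>Returns the list of queried points (in order) and either None (all points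
  below D[i,j] classified inside) or Some p (witness outside C).\<close>
function rec_call :: "(pt \<Rightarrow> bool) \<Rightarrow> pt list \<Rightarrow> nat \<Rightarrow> nat \<Rightarrow> pt list \<times> pt option" where
  "rec_call inC w i j =
    (if j \<le> i then ([], None) else
     (let q = line_inter (w ! (i - 1)) (w ! i) (w ! (j - 1)) (w ! j) in
      if inC q then ([q], None) else
      (let m = (i + j) div 2; x = w ! (m - 1); y = w ! m in
       if \<not> inC x then ([q, x], Some x)
       else if \<not> inC y then ([q, x, y], Some y)
       else if j = i + 1 then ([q, x, y], None)
       else (case rec_call inC w i m of
               (t1, Some p) \<Rightarrow> ([q, x, y] @ t1, Some p)
             | (t1, None) \<Rightarrow> (case rec_call inC w m j of
                    (t2, r2) \<Rightarrow> ([q, x, y] @ t1 @ t2, r2))))))"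
  by pat_completeness auto
termination
  by (relation "Wellfounded.measure (\<lambda>(_, _, i, j). j - i)") auto

definition upper_part :: "(pt \<Rightarrow> bool) \<Rightarrow> pt set \<Rightarrow> pt list \<times> pt option" where
  "upper_part inC P = rec_call inC (upper_chain P) 1 (length (upper_chain P) - 1)"

text \<open>Points below vv' are handled symmetrically, via the point reflection
  p \<mapsto> -p (which swaps v and v' and maps the lower chain onto an upper chain).\<close>
definition lower_part :: "(pt \<Rightarrow> bool) \<Rightarrow> pt set \<Rightarrow> pt list \<times> pt option" where
  "lower_part inC P =
     (case upper_part (\<lambda>q. inC (- q)) (uminus ` P) of
        (t, r) \<Rightarrow> (map uminus t, map_option uminus r))"

definition end_nbrs :: "pt list \<Rightarrow> pt list" where
  "end_nbrs w = (if length w \<ge> 2 then [w ! 1, w ! (length w - 2)] else [])"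

text \<open>The whole classification algorithm with separation oracle for C
  (only the in/out answer is used). Returns the queried points and the
  outcome: None = "P \<subseteq> C verified", Some p = witness p reported outside.\<close>
definition classify :: "pt set \<Rightarrow> pt set \<Rightarrow> pt list \<times> pt option" where
  "classify C P =
     (let inC = (\<lambda>q. q \<in> C);
          init = [leftmost P, rightmost P] @ end_nbrs (upper_chain P)
                 @ map uminus (end_nbrs (upper_chain (uminus ` P)))
      in case find (\<lambda>q. \<not> inC q) init of
           Some p \<Rightarrow> (init, Some p)
         | None \<Rightarrow> (case upper_part inC P of
              (t1, Some p) \<Rightarrow> (init @ t1, Some p)
            | (t1, None) \<Rightarrow> (case lower_part inC P of
                 (t2, r2) \<Rightarrow> (init @ t1 @ t2, r2))))"

definition inner_fence_size :: "pt set \<Rightarrow> pt set \<Rightarrow> nat" where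
  "inner_fence_size C P = (LEAST k. \<exists>V. finite V \<and> card V = k \<and>
      convex hull V \<subseteq> C \<and> C \<inter> P = convex hull V \<inter> P)"

definition convex_body :: "pt set \<Rightarrow> bool" where
  "convex_body C \<longleftrightarrow> compact C \<and> convex C \<and> interior C \<noteq> {}"

end

theory Submission
  imports Defs
begin


lemma cross2_add_left[simp]: "cross2 (a + b) c = cross2 a c + cross2 b c"
  by (simp add: cross2_def algebra_simps)
lemma cross2_add_right[simp]: "cross2 c (a + b) = cross2 c a + cross2 c b"
  by (simp add: cross2_def algebra_simps)
lemma cross2_diff_left[simp]: "cross2 (a - b) c = cross2 a c - cross2 b c"
  by (simp add: cross2_def algebra_simps)
lemma cross2_diff_right[simp]: "cross2 c (a - b) = cross2 c a - cross2 c b"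
  by (simp add: cross2_def algebra_simps)
lemma cross2_scaleR_left[simp]: "cross2 (r *\<^sub>R a) c = r * cross2 a c"
  by (simp add: cross2_def algebra_simps)
lemma cross2_scaleR_right[simp]: "cross2 c (r *\<^sub>R a) = r * cross2 c a"
  by (simp add: cross2_def algebra_simps)
lemma cross2_minus_left[simp]: "cross2 (- a) c = - cross2 a c"
  by (simp add: cross2_def algebra_simps)
lemma cross2_minus_right[simp]: "cross2 c (- a) = - cross2 c a"
  by (simp add: cross2_def algebra_simps)
lemma cross2_self[simp]: "cross2 a a = 0"
  by (simp add: cross2_def algebra_simps)
lemma cross2_anti: "cross2 a b = - cross2 b a"
  by (simp add: cross2_def algebra_simps)

lemma cramer0: "cross2 u v *\<^sub>R x = cross2 x v *\<^sub>R u + cross2 u x *\<^sub>R v"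
  by (simp add: prod_eq_iff cross2_def algebra_simps)

lemma cramer:
  assumes "cross2 u v \<noteq> 0"
  shows "x = (cross2 x v / cross2 u v) *\<^sub>R u + (cross2 u x / cross2 u v) *\<^sub>R v"
proof -
  have "x = (1 / cross2 u v) *\<^sub>R (cross2 u v *\<^sub>R x)" using assms by simp
  also have "\<dots> = (1 / cross2 u v) *\<^sub>R (cross2 x v *\<^sub>R u + cross2 u x *\<^sub>R v)"
    by (subst cramer0, rule refl)
  finally show ?thesis by (simp add: scaleR_add_right)
qed

lemma line_inter_alt:
  assumes "cross2 d1 d2 \<noteq> 0"
  shows "A + (cross2 (W - A) d2 / cross2 d1 d2) *\<^sub>R d1 = W + (cross2 d1 (A - W) / cross2 d1 d2) *\<^sub>R d2"
proof -
  have "W - A = (cross2 (W - A) d2 / cross2 d1 d2) *\<^sub>R d1 + (cross2 d1 (W - A) / cross2 d1 d2) *\<^sub>R d2"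
    using cramer[OF assms] by blast
  then have "W = A + (cross2 (W - A) d2 / cross2 d1 d2) *\<^sub>R d1 + (cross2 d1 (W - A) / cross2 d1 d2) *\<^sub>R d2"
    by (simp add: algebra_simps)
  moreover have "(cross2 d1 (A - W) / cross2 d1 d2) *\<^sub>R d2 = - ((cross2 d1 (W - A) / cross2 d1 d2) *\<^sub>R d2)"
    by (metis cross2_minus_right minus_diff_eq minus_divide_left scaleR_minus_left)
  ultimately show ?thesis by (metis add_diff_cancel diff_conv_add_uminus)
qed


definition dd :: "pt list \<Rightarrow> nat \<Rightarrow> pt" where "dd w s = w!s - w!(s-1)"

definition chainok :: "pt list \<Rightarrow> bool" where
  "chainok w \<longleftrightarrow> (\<forall>s r. 1 \<le> s \<and> s < r \<and> r < length w \<longrightarrow> cross2 (dd w s) (dd w r) < 0)"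

lemma chain_L1:
  assumes "chainok w" "1 \<le> s" "s \<le> c" "d < length w"
  shows "d = Suc c + n \<Longrightarrow> cross2 (dd w s) (w!d - w!c) < 0"
  using assms(4)
proof (induction n arbitrary: d)
  case 0
  then have "w!d - w!c = dd w d" by (simp add: dd_def)
  then show ?case using assms 0 by (simp add: chainok_def)
next
  case (Suc n)
  have "w!d - w!c = dd w d + (w!(Suc c + n) - w!c)" using Suc by (simp add: dd_def)
  moreover have "cross2 (dd w s) (dd w d) < 0" using assms Suc by (simp add: chainok_def)
  moreover have "cross2 (dd w s) (w!(Suc c + n) - w!c) < 0" using Suc by simp
  ultimately show ?case by simp
qed

lemma chain_L2:
  assumes "chainok w" "c < d" "d < length w"
  shows "b = Suc a + n \<Longrightarrow> b \<le> c \<Longrightarrow> cross2 (w!b - w!a) (w!d - w!c) < 0"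
proof (induction n arbitrary: b)
  case 0
  then have "w!b - w!a = dd w b" by (simp add: dd_def)
  moreover have "cross2 (dd w b) (w!d - w!c) < 0"
    by (rule chain_L1[of w b c d "d - Suc c"]) (use assms 0 in auto)
  ultimately show ?case by simp
next
  case (Suc n)
  have "w!b - w!a = dd w b + (w!(Suc a + n) - w!a)" using Suc by (simp add: dd_def)
  moreover have "cross2 (dd w b) (w!d - w!c) < 0"
    by (rule chain_L1[of w b c d "d - Suc c"]) (use assms Suc in auto)
  moreover have "cross2 (w!(Suc a + n) - w!a) (w!d - w!c) < 0" using Suc by simp
  ultimately show ?case by simp
qed

lemma Mlt_chain:
  assumes "chainok w" "a < b" "b \<le> c" "c < d" "d < length w"
  shows "cross2 (w!b - w!a) (w!d - w!c) < 0"
  using chain_L2[OF assms(1,4,5), of b a "b - Suc a"] assms(2,3) by simp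

lemma Mle_chain:
  assumes "chainok w" "a \<le> b" "b \<le> c" "c \<le> d" "d < length w"
  shows "cross2 (w!b - w!a) (w!d - w!c) \<le> 0"
proof (cases "a = b \<or> c = d")
  case True then show ?thesis by auto
next
  case False then show ?thesis using Mlt_chain[of w a b c d] assms by force
qed

lemma call_facts:
  assumes "chainok w" "1 \<le> i" "i < j" "j < length w"
  shows "\<exists>\<tau> \<mu>. \<tau> > 0 \<and> \<mu> \<le> 0 \<and>
     line_inter (w!(i-1)) (w!i) (w!(j-1)) (w!j) = w!(i-1) + \<tau> *\<^sub>R dd w i \<and>
     line_inter (w!(i-1)) (w!i) (w!(j-1)) (w!j) = w!(j-1) + \<mu> *\<^sub>R dd w j \<and>
     cross2 (dd w i) (dd w j) < 0"
proof -
  let ?A = "w!(i-1)"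
  have k: "cross2 (dd w i) (dd w j) < 0"
    using Mlt_chain[OF assms(1), of "i-1" i "j-1" j] assms by (simp add: dd_def)
  have n: "cross2 (w!(j-1) - ?A) (dd w j) < 0"
    using Mlt_chain[OF assms(1), of "i-1" "j-1" "j-1" j] assms by (simp add: dd_def)
  define \<tau> where "\<tau> = cross2 (w!(j-1) - ?A) (dd w j) / cross2 (dd w i) (dd w j)"
  define \<mu> where "\<mu> = cross2 (dd w i) (?A - w!(j-1)) / cross2 (dd w i) (dd w j)"
  have t: "\<tau> > 0" unfolding \<tau>_def using k n by (simp add: divide_neg_neg)
  have m0: "cross2 (dd w i) (w!(j-1) - w!i) \<le> 0"
    using Mle_chain[OF assms(1), of "i-1" i i "j-1"] assms by (simp add: dd_def)
  have "cross2 (dd w i) (?A - w!(j-1)) = - cross2 (dd w i) (w!(j-1) - w!i)"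
    by (simp add: dd_def cross2_def algebra_simps)
  then have "cross2 (dd w i) (?A - w!(j-1)) \<ge> 0" using m0 by simp
  then have m: "\<mu> \<le> 0" unfolding \<mu>_def using k by (simp add: divide_nonneg_neg)
  have q1: "line_inter (w!(i-1)) (w!i) (w!(j-1)) (w!j) = ?A + \<tau> *\<^sub>R dd w i"
    by (simp add: line_inter_def \<tau>_def dd_def)
  have q2: "?A + \<tau> *\<^sub>R dd w i = w!(j-1) + \<mu> *\<^sub>R dd w j"
    unfolding \<tau>_def \<mu>_def by (rule line_inter_alt) (use k in simp)
  show ?thesis using t m q1 q2 k by metis
qed


lemma triangle_mem:
  assumes "chainok w" "1 \<le> i" "i < j" "j < length w" "i - 1 \<le> t" "t \<le> j"
  shows "w!t \<in> convex hull {w!(i-1), line_inter (w!(i-1)) (w!i) (w!(j-1)) (w!j), w!j}"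
proof (cases "t = i - 1 \<or> t = j")
  case True then show ?thesis by (auto intro: hull_inc)
next
  case False
  then have tt: "i \<le> t" "t < j" using assms by auto
  obtain \<tau> \<mu> where t: "\<tau> > 0" and m: "\<mu> \<le> 0"
    and q1: "line_inter (w!(i-1)) (w!i) (w!(j-1)) (w!j) = w!(i-1) + \<tau> *\<^sub>R dd w i"
    and q2: "line_inter (w!(i-1)) (w!i) (w!(j-1)) (w!j) = w!(j-1) + \<mu> *\<^sub>R dd w j"
    using call_facts[OF assms(1-4)] by blast
  define q where "q = line_inter (w!(i-1)) (w!i) (w!(j-1)) (w!j)"
  define A where "A = w!(i-1)"
  define W where "W = w!j"
  define u where "u = q - A"
  define v where "v = W - A"
  define X where "X = w!t - A"
  have u: "u = \<tau> *\<^sub>R dd w i" using q1 by (simp add: u_def q_def A_def)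
  have c1: "cross2 (dd w i) (W - w!i) < 0"
    using Mlt_chain[OF assms(1), of "i-1" i i j] assms by (simp add: dd_def W_def)
  have "cross2 (dd w i) v = cross2 (dd w i) (W - w!i)"
    by (simp add: v_def dd_def A_def cross2_def algebra_simps)
  then have uv: "cross2 u v < 0" using c1 t by (simp add: u mult_pos_neg)
  have "cross2 X v = cross2 (w!t - A) (W - w!t)"
    by (simp add: X_def v_def cross2_def algebra_simps)
  also have "\<dots> \<le> 0" using Mle_chain[OF assms(1), of "i-1" t t j] assms tt by (simp add: A_def W_def)
  finally have Xv: "cross2 X v \<le> 0" .
  have "cross2 (dd w i) X = cross2 (dd w i) (w!t - w!i)"
    by (simp add: X_def dd_def A_def cross2_def algebra_simps)
  also have "\<dots> \<le> 0" using Mle_chain[OF assms(1), of "i-1" i i t] assms tt by (simp add: dd_def)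
  finally have "cross2 (dd w i) X \<le> 0" .
  then have uX: "cross2 u X \<le> 0" using t by (simp add: u mult_nonneg_nonpos)
  define F where "F = w!(j-1) - w!t"
  have FN: "cross2 F (dd w j) \<le> 0"
    using Mle_chain[OF assms(1), of t "j-1" "j-1" j] assms tt by (simp add: F_def dd_def)
  have "u - X = F + \<mu> *\<^sub>R dd w j" using q2 by (simp add: u_def X_def F_def q_def)
  moreover have "v - X = F + dd w j" by (simp add: v_def X_def F_def dd_def W_def)
  ultimately have "cross2 (u - X) (v - X) = (1 - \<mu>) * cross2 F (dd w j)"
    by (simp add: cross2_def algebra_simps)
  also have "\<dots> \<le> 0" using m FN by (simp add: mult_nonneg_nonpos)
  finally have N: "cross2 (u - X) (v - X) \<le> 0" .
  define \<beta> where "\<beta> = cross2 X v / cross2 u v"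
  define \<gamma> where "\<gamma> = cross2 u X / cross2 u v"
  have b: "\<beta> \<ge> 0" unfolding \<beta>_def using Xv uv by (simp add: divide_nonpos_neg)
  have g: "\<gamma> \<ge> 0" unfolding \<gamma>_def using uX uv by (simp add: divide_nonpos_neg)
  have NN: "cross2 (u - X) (v - X) = cross2 u v - cross2 X v - cross2 u X"
    by (simp add: cross2_def algebra_simps)
  have "1 - \<beta> - \<gamma> = (cross2 u v - cross2 X v - cross2 u X) / cross2 u v"
    using uv unfolding \<beta>_def \<gamma>_def by (simp add: field_simps)
  then have "1 - \<beta> - \<gamma> = cross2 (u - X) (v - X) / cross2 u v" using NN by simp
  then have a: "1 - \<beta> - \<gamma> \<ge> 0" using N uv by (simp add: divide_nonpos_neg)
  have X: "X = \<beta> *\<^sub>R u + \<gamma> *\<^sub>R v" unfolding \<beta>_def \<gamma>_def by (rule cramer) (use uv in simp)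
  have "w!t = (1 - \<beta> - \<gamma>) *\<^sub>R A + \<beta> *\<^sub>R q + \<gamma> *\<^sub>R W"
  proof -
    have "w!t = A + X" by (simp add: X_def)
    also have "\<dots> = A + \<beta> *\<^sub>R (q - A) + \<gamma> *\<^sub>R (W - A)" using X by (simp add: u_def v_def)
    also have "\<dots> = (1 - \<beta> - \<gamma>) *\<^sub>R A + \<beta> *\<^sub>R q + \<gamma> *\<^sub>R W" by (simp add: algebra_simps)
    finally show ?thesis .
  qed
  then show ?thesis unfolding convex_hull_3 A_def W_def q_def using a b g
    by (smt (verit, best) mem_Collect_eq)
qed

lemma conv3_lemma:
  fixes A W z q d1 d2 :: pt
  assumes "A = q - \<tau> *\<^sub>R d1" "W = q + \<sigma> *\<^sub>R d2" "z = q + a *\<^sub>R d1 + b *\<^sub>R d2"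
    "\<tau> > 0" "\<sigma> > 0" "a \<ge> 0" "b \<le> 0"
  shows "q \<in> convex hull {A, W, z}"
proof -
  define S where "S = 1 + a / \<tau> - b / \<sigma>"
  have Sp: "S > 0" unfolding S_def using assms
    by (smt (verit) divide_nonneg_pos divide_nonpos_pos)
  have e1: "(a / \<tau>) *\<^sub>R A = (a / \<tau>) *\<^sub>R q - a *\<^sub>R d1"
    using assms(1,4) by (simp add: scaleR_diff_right)
  have e2: "(- b / \<sigma>) *\<^sub>R W = (- b / \<sigma>) *\<^sub>R q - b *\<^sub>R d2"
    using assms(2,5) by (simp add: scaleR_add_right)
  have "(a / \<tau>) *\<^sub>R A + (- b / \<sigma>) *\<^sub>R W + z = S *\<^sub>R q"
    unfolding e1 e2 assms(3) S_def by (simp add: algebra_simps)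
  then have e: "S *\<^sub>R q = (a / \<tau>) *\<^sub>R A + (- b / \<sigma>) *\<^sub>R W + z" by simp
  have "q = (1/S) *\<^sub>R (S *\<^sub>R q)" using Sp by simp
  also have "\<dots> = ((a / \<tau>) / S) *\<^sub>R A + ((- b / \<sigma>) / S) *\<^sub>R W + (1 / S) *\<^sub>R z"
    by (simp only: e) (simp add: scaleR_add_right scaleR_diff_right mult.commute)
  finally have qe: "q = ((a / \<tau>) / S) *\<^sub>R A + ((- b / \<sigma>) / S) *\<^sub>R W + (1 / S) *\<^sub>R z" .
  have w1: "(a / \<tau>) / S \<ge> 0" using Sp assms by simp
  have w2: "(- b / \<sigma>) / S \<ge> 0" using Sp assms by (simp add: divide_nonpos_pos)
  have w3: "1 / S \<ge> 0" using Sp by simp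
  have "(a / \<tau>) / S + (- b / \<sigma>) / S + 1 / S = (a / \<tau> + (- b / \<sigma>) + 1) / S"
    by (simp add: add_divide_distrib diff_divide_distrib)
  also have "\<dots> = S / S" by (simp add: S_def)
  finally have ws: "(a / \<tau>) / S + (- b / \<sigma>) / S + 1 / S = 1" using Sp by simp
  show ?thesis unfolding convex_hull_3 using qe w1 w2 w3 ws by blast
qed


definition Mx :: "pt set \<Rightarrow> pt \<Rightarrow> pt set" where
  "Mx V d = {z \<in> V. \<forall>y\<in>V. cross2 d y \<le> cross2 d z}"

lemma hull_bound:
  assumes "x \<in> convex hull V" "\<forall>y\<in>V. cross2 d y \<le> m"
  shows "cross2 d x \<le> m"
proof -
  have e: "{x. cross2 d x \<le> m} = {x. inner (- snd d, fst d) x \<le> m}"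
    by (auto simp: cross2_def inner_prod_def algebra_simps)
  have "convex {x. cross2 d x \<le> m}" unfolding e by (rule convex_halfspace_le)
  then have "convex hull V \<subseteq> {x. cross2 d x \<le> m}"
    using assms(2) by (intro hull_minimal) auto
  then show ?thesis using assms(1) by auto
qed

lemma Mx_ne:
  assumes "finite V" "V \<noteq> {}"
  shows "Mx V d \<noteq> {}"
proof -
  let ?m = "Max ((\<lambda>y. cross2 d y) ` V)"
  have "?m \<in> (\<lambda>y. cross2 d y) ` V" using assms by (intro Max_in) auto
  then obtain z where z: "z \<in> V" "cross2 d z = ?m" by auto
  have "\<forall>y\<in>V. cross2 d y \<le> cross2 d z" using z assms by (simp add: Max_ge)
  then have "z \<in> Mx V d" using z unfolding Mx_def by simp
  then show ?thesis by blast
qed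

lemma q_in_conv:
  assumes "chainok w" "1 \<le> i" "i < j" "j < length w"
    "cross2 (dd w i) (z - w!(i-1)) \<ge> 0" "cross2 (dd w j) (z - w!j) \<ge> 0"
  shows "line_inter (w!(i-1)) (w!i) (w!(j-1)) (w!j) \<in> convex hull {w!(i-1), w!j, z}"
proof -
  obtain \<tau> \<mu> where t: "\<tau> > 0" and m: "\<mu> \<le> 0"
    and q1: "line_inter (w!(i-1)) (w!i) (w!(j-1)) (w!j) = w!(i-1) + \<tau> *\<^sub>R dd w i"
    and q2: "line_inter (w!(i-1)) (w!i) (w!(j-1)) (w!j) = w!(j-1) + \<mu> *\<^sub>R dd w j"
    and k: "cross2 (dd w i) (dd w j) < 0"
    using call_facts[OF assms(1-4)] by blast
  define q where "q = line_inter (w!(i-1)) (w!i) (w!(j-1)) (w!j)"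
  define a where "a = cross2 (z - q) (dd w j) / cross2 (dd w i) (dd w j)"
  define b where "b = cross2 (dd w i) (z - q) / cross2 (dd w i) (dd w j)"
  have zq: "z - q = a *\<^sub>R dd w i + b *\<^sub>R dd w j"
    unfolding a_def b_def by (rule cramer) (use k in simp)
  have e: "z - q = (z - w!(i-1)) - \<tau> *\<^sub>R dd w i" using q1 by (simp add: q_def)
  have "cross2 (dd w i) (z - q) = cross2 (dd w i) (z - w!(i-1)) - \<tau> * cross2 (dd w i) (dd w i)"
    unfolding e by (simp only: cross2_diff_right cross2_scaleR_right)
  then have "cross2 (dd w i) (z - q) = cross2 (dd w i) (z - w!(i-1))" by simp
  then have b0: "b \<le> 0" unfolding b_def using assms(5) k by (simp add: divide_nonneg_neg)
  have Wq: "w!j - q = (1 - \<mu>) *\<^sub>R dd w j" using q2 by (simp add: q_def dd_def algebra_simps)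
  have "z - q = (z - w!j) + (w!j - q)" by simp
  then have "cross2 (dd w j) (z - q) = cross2 (dd w j) (z - w!j) + (1 - \<mu>) * cross2 (dd w j) (dd w j)"
    unfolding Wq by (simp only: cross2_add_right cross2_scaleR_right)
  then have "cross2 (dd w j) (z - q) = cross2 (dd w j) (z - w!j)" by simp
  then have "cross2 (z - q) (dd w j) \<le> 0" using assms(6) cross2_anti[of "z - q" "dd w j"] by simp
  then have a0: "a \<ge> 0" unfolding a_def using k by (simp add: divide_nonpos_neg)
  have "q \<in> convex hull {w!(i-1), w!j, z}"
  proof (rule conv3_lemma[of _ q \<tau> "dd w i" _ "1 - \<mu>" "dd w j" _ a b])
    show "w ! (i - 1) = q - \<tau> *\<^sub>R dd w i" using q1 by (simp add: q_def)
    show "w ! j = q + (1 - \<mu>) *\<^sub>R dd w j" using Wq by (simp add: algebra_simps)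
    show "z = q + a *\<^sub>R dd w i + b *\<^sub>R dd w j" using zq by (simp add: algebra_simps)
  qed (use t m a0 b0 in auto)
  then show ?thesis by (simp add: q_def)
qed

lemma contig:
  assumes "chainok w" "1 \<le> s" "s < t" "t < r" "r < length w"
    "z \<in> Mx V (dd w s)" "z \<in> Mx V (dd w r)"
  shows "z \<in> Mx V (dd w t)"
proof -
  have k: "cross2 (dd w s) (dd w r) < 0" using assms unfolding chainok_def by auto
  have k1: "cross2 (dd w t) (dd w r) < 0" using assms unfolding chainok_def by auto
  have k2: "cross2 (dd w s) (dd w t) < 0" using assms unfolding chainok_def by auto
  define \<alpha> where "\<alpha> = cross2 (dd w t) (dd w r) / cross2 (dd w s) (dd w r)"
  define \<beta> where "\<beta> = cross2 (dd w s) (dd w t) / cross2 (dd w s) (dd w r)"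
  have al: "\<alpha> \<ge> 0" unfolding \<alpha>_def using k k1 by (simp add: divide_nonpos_neg)
  have be: "\<beta> \<ge> 0" unfolding \<beta>_def using k k2 by (simp add: divide_nonpos_neg)
  have dt: "dd w t = \<alpha> *\<^sub>R dd w s + \<beta> *\<^sub>R dd w r"
    unfolding \<alpha>_def \<beta>_def by (rule cramer) (use k in simp)
  have "\<forall>y\<in>V. cross2 (dd w t) y \<le> cross2 (dd w t) z"
  proof
    fix y assume y: "y \<in> V"
    have "cross2 (dd w s) y \<le> cross2 (dd w s) z" "cross2 (dd w r) y \<le> cross2 (dd w r) z"
      using assms(6,7) y unfolding Mx_def by auto
    then have "\<alpha> * cross2 (dd w s) y + \<beta> * cross2 (dd w r) y \<le> \<alpha> * cross2 (dd w s) z + \<beta> * cross2 (dd w r) z"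
      using al be by (intro add_mono mult_left_mono) auto
    then show "cross2 (dd w t) y \<le> cross2 (dd w t) z" unfolding dt by simp
  qed
  then show ?thesis using assms(6) unfolding Mx_def by auto
qed

lemma charged:
  assumes "chainok w" "1 \<le> i" "i < j" "j < length w"
    "w!(i-1) \<in> convex hull V" "w!j \<in> convex hull V"
    "line_inter (w!(i-1)) (w!i) (w!(j-1)) (w!j) \<notin> convex hull V"
  shows "Mx V (dd w i) \<inter> Mx V (dd w j) = {}"
proof (rule ccontr)
  assume "Mx V (dd w i) \<inter> Mx V (dd w j) \<noteq> {}"
  then obtain z where z: "z \<in> Mx V (dd w i)" "z \<in> Mx V (dd w j)" by auto
  have "cross2 (dd w i) (w!(i-1)) \<le> cross2 (dd w i) z"
    using z(1) assms(5) by (intro hull_bound) (auto simp: Mx_def)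
  then have c1: "cross2 (dd w i) (z - w!(i-1)) \<ge> 0" by simp
  have "cross2 (dd w j) (w!j) \<le> cross2 (dd w j) z"
    using z(2) assms(6) by (intro hull_bound) (auto simp: Mx_def)
  then have c2: "cross2 (dd w j) (z - w!j) \<ge> 0" by simp
  have "line_inter (w!(i-1)) (w!i) (w!(j-1)) (w!j) \<in> convex hull {w!(i-1), w!j, z}"
    by (rule q_in_conv[OF assms(1-4) c1 c2])
  moreover have "convex hull {w!(i-1), w!j, z} \<subseteq> convex hull V"
    using assms(5,6) z(1) by (intro convex_hull_subset) (auto simp: Mx_def hull_inc)
  ultimately show False using assms(7) by auto
qed


declare rec_call.simps[simp del]

lemma rc_base: "j \<le> i \<Longrightarrow> rec_call inC w i j = ([], None)"
  by (subst rec_call.simps) simp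

lemma rc_in: "\<not> j \<le> i \<Longrightarrow> inC (line_inter (w!(i-1)) (w!i) (w!(j-1)) (w!j)) \<Longrightarrow>
   rec_call inC w i j = ([line_inter (w!(i-1)) (w!i) (w!(j-1)) (w!j)], None)"
  by (subst rec_call.simps) (simp add: Let_def)

lemma rc_x: "\<not> j \<le> i \<Longrightarrow> \<not> inC (line_inter (w!(i-1)) (w!i) (w!(j-1)) (w!j)) \<Longrightarrow>
   \<not> inC (w!((i+j) div 2 - 1)) \<Longrightarrow>
   rec_call inC w i j = ([line_inter (w!(i-1)) (w!i) (w!(j-1)) (w!j), w!((i+j) div 2 - 1)], Some (w!((i+j) div 2 - 1)))"
  by (subst rec_call.simps) (simp add: Let_def)

lemma rc_y: "\<not> j \<le> i \<Longrightarrow> \<not> inC (line_inter (w!(i-1)) (w!i) (w!(j-1)) (w!j)) \<Longrightarrow>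
   inC (w!((i+j) div 2 - 1)) \<Longrightarrow> \<not> inC (w!((i+j) div 2)) \<Longrightarrow>
   rec_call inC w i j = ([line_inter (w!(i-1)) (w!i) (w!(j-1)) (w!j), w!((i+j) div 2 - 1), w!((i+j) div 2)], Some (w!((i+j) div 2)))"
  by (subst rec_call.simps) (simp add: Let_def)

lemma rc_leaf: "\<not> j \<le> i \<Longrightarrow> \<not> inC (line_inter (w!(i-1)) (w!i) (w!(j-1)) (w!j)) \<Longrightarrow>
   inC (w!((i+j) div 2 - 1)) \<Longrightarrow> inC (w!((i+j) div 2)) \<Longrightarrow> j = i + 1 \<Longrightarrow>
   rec_call inC w i j = ([line_inter (w!(i-1)) (w!i) (w!(j-1)) (w!j), w!((i+j) div 2 - 1), w!((i+j) div 2)], None)"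
  by (subst rec_call.simps) (simp add: Let_def)

lemma rc_rec: "\<not> j \<le> i \<Longrightarrow> \<not> inC (line_inter (w!(i-1)) (w!i) (w!(j-1)) (w!j)) \<Longrightarrow>
   inC (w!((i+j) div 2 - 1)) \<Longrightarrow> inC (w!((i+j) div 2)) \<Longrightarrow> j \<noteq> i + 1 \<Longrightarrow>
   rec_call inC w i j = (let pre = [line_inter (w!(i-1)) (w!i) (w!(j-1)) (w!j), w!((i+j) div 2 - 1), w!((i+j) div 2)] in
     (case rec_call inC w i ((i+j) div 2) of
               (t1, Some p) \<Rightarrow> (pre @ t1, Some p)
             | (t1, None) \<Rightarrow> (case rec_call inC w ((i+j) div 2) j of
                    (t2, r2) \<Rightarrow> (pre @ t1 @ t2, r2))))"
  by (subst rec_call.simps) (simp add: Let_def)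

lemma rec_correct:
  assumes "chainok w" "convex C"
  shows "1 \<le> i \<Longrightarrow> j < length w \<Longrightarrow> w!(i-1) \<in> C \<Longrightarrow> w!j \<in> C \<Longrightarrow>
    (snd (rec_call (\<lambda>x. x \<in> C) w i j) = None \<longrightarrow> (\<forall>t. i-1 \<le> t \<and> t \<le> j \<longrightarrow> w!t \<in> C)) \<and>
    (\<forall>p. snd (rec_call (\<lambda>x. x \<in> C) w i j) = Some p \<longrightarrow> p \<in> set w \<and> p \<notin> C)"
proof (induction "j - i" arbitrary: i j rule: less_induct)
  case less
  define q where "q = line_inter (w!(i-1)) (w!i) (w!(j-1)) (w!j)"
  define m where "m = (i + j) div 2"
  show ?case
  proof (cases "j \<le> i")
    case True
    have "\<forall>t. i-1 \<le> t \<and> t \<le> j \<longrightarrow> w!t \<in> C"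
    proof (intro allI impI)
      fix t assume "i - 1 \<le> t \<and> t \<le> j"
      then have "t = i - 1 \<or> t = j" using True by auto
      then show "w!t \<in> C" using less.prems by auto
    qed
    then show ?thesis using True by (simp add: rc_base)
  next
    case nj: False
    show ?thesis
    proof (cases "q \<in> C")
      case True
      have "\<forall>t. i-1 \<le> t \<and> t \<le> j \<longrightarrow> w!t \<in> C"
      proof (intro allI impI)
        fix t assume t: "i - 1 \<le> t \<and> t \<le> j"
        have "w!t \<in> convex hull {w!(i-1), q, w!j}"
          unfolding q_def by (rule triangle_mem) (use assms less.prems nj t in auto)
        moreover have "convex hull {w!(i-1), q, w!j} \<subseteq> C"
          using less.prems True assms by (intro hull_minimal) auto
        ultimately show "w!t \<in> C" by auto
      qed
      then show ?thesis using True nj by (simp add: rc_in q_def)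
    next
      case nq: False
      have mlen: "m < length w" "m - 1 < length w" using less.prems nj unfolding m_def by auto
      show ?thesis
      proof (cases "w!(m-1) \<in> C")
        case False
        then show ?thesis using nj nq mlen by (simp add: rc_x q_def m_def)
      next
        case x: True
        show ?thesis
        proof (cases "w!m \<in> C")
          case False
          then show ?thesis using nj nq x mlen by (simp add: rc_y q_def m_def)
        next
          case y: True
          show ?thesis
          proof (cases "j = i + 1")
            case True
            have "\<forall>t. i-1 \<le> t \<and> t \<le> j \<longrightarrow> w!t \<in> C"
            proof (intro allI impI)
              fix t assume "i - 1 \<le> t \<and> t \<le> j"
              then have "t = i - 1 \<or> t = i \<or> t = j" using True less.prems by auto
              moreover have "m = i" using True unfolding m_def by auto
              ultimately show "w!t \<in> C" using less.prems x y by auto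
            qed
            then show ?thesis using nj nq x y True by (simp add: rc_leaf q_def m_def)
          next
            case nl: False
            have mi: "i < m" "m < j" using nj nl unfolding m_def by auto
            have IH1: "(snd (rec_call (\<lambda>x. x \<in> C) w i m) = None \<longrightarrow> (\<forall>t. i-1 \<le> t \<and> t \<le> m \<longrightarrow> w!t \<in> C)) \<and>
              (\<forall>p. snd (rec_call (\<lambda>x. x \<in> C) w i m) = Some p \<longrightarrow> p \<in> set w \<and> p \<notin> C)"
              using less.hyps[of m i] less.prems mi y mlen by auto
            have IH2: "(snd (rec_call (\<lambda>x. x \<in> C) w m j) = None \<longrightarrow> (\<forall>t. m-1 \<le> t \<and> t \<le> j \<longrightarrow> w!t \<in> C)) \<and>
              (\<forall>p. snd (rec_call (\<lambda>x. x \<in> C) w m j) = Some p \<longrightarrow> p \<in> set w \<and> p \<notin> C)"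
              using less.hyps[of j m] less.prems mi x mlen by auto
            have e: "rec_call (\<lambda>x. x \<in> C) w i j = (let pre = [q, w!(m-1), w!m] in
               (case rec_call (\<lambda>x. x \<in> C) w i m of
                 (t1, Some p) \<Rightarrow> (pre @ t1, Some p)
               | (t1, None) \<Rightarrow> (case rec_call (\<lambda>x. x \<in> C) w m j of (t2, r2) \<Rightarrow> (pre @ t1 @ t2, r2))))"
              using rc_rec[of j i "\<lambda>x. x \<in> C" w] nj nq x y nl by (simp add: q_def m_def)
            show ?thesis
            proof (cases "snd (rec_call (\<lambda>x. x \<in> C) w i m)")
              case (Some p)
              then show ?thesis using e IH1 by (cases "rec_call (\<lambda>x. x \<in> C) w i m") (auto simp: Let_def)
            next
              case None
              then have e2: "snd (rec_call (\<lambda>x. x \<in> C) w i j) = snd (rec_call (\<lambda>x. x \<in> C) w m j)"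
                using e by (cases "rec_call (\<lambda>x. x \<in> C) w i m"; cases "rec_call (\<lambda>x. x \<in> C) w m j") (auto simp: Let_def)
              have "\<forall>t. i-1 \<le> t \<and> t \<le> j \<longrightarrow> w!t \<in> C" if "snd (rec_call (\<lambda>x. x \<in> C) w m j) = None"
              proof (intro allI impI)
                fix t assume t: "i - 1 \<le> t \<and> t \<le> j"
                show "w!t \<in> C"
                proof (cases "t \<le> m")
                  case True then show ?thesis using IH1 None t by auto
                next
                  case False then show ?thesis using IH2 that t by auto
                qed
              qed
              then show ?thesis using e2 IH2 by auto
            qed
          qed
        qed
      qed
    qed
  qed
qed


definition UU :: "pt set \<Rightarrow> pt list \<Rightarrow> nat \<Rightarrow> nat \<Rightarrow> pt set" where
  "UU V w i j = {z \<in> V. (\<exists>t. i \<le> t \<and> t < j \<and> z \<in> Mx V (dd w t)) \<and> z \<notin> Mx V (dd w j)}"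

lemma UU_mem: "z \<in> UU V w i j \<longleftrightarrow> z \<in> V \<and> (\<exists>t. i \<le> t \<and> t < j \<and> z \<in> Mx V (dd w t)) \<and> z \<notin> Mx V (dd w j)"
  unfolding UU_def by simp

lemma UU_split:
  assumes "chainok w" "1 \<le> i" "i < m" "m < j" "j < length w" "finite V"
  shows "card (UU V w i m) + card (UU V w m j) \<le> card (UU V w i j)"
proof -
  have s1: "UU V w i m \<subseteq> UU V w i j"
  proof
    fix z assume z: "z \<in> UU V w i m"
    then obtain t where t: "i \<le> t" "t < m" "z \<in> Mx V (dd w t)" "z \<notin> Mx V (dd w m)" "z \<in> V"
      unfolding UU_mem by blast
    have "z \<notin> Mx V (dd w j)"
    proof
      assume "z \<in> Mx V (dd w j)"
      then have "z \<in> Mx V (dd w m)"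
        using contig[OF assms(1), of t m j z V] t(1,2,3) assms(2,4,5) by simp
      then show False using t(4) by blast
    qed
    moreover have "t < j" using t(2) assms(4) by simp
    ultimately show "z \<in> UU V w i j" using t unfolding UU_mem by blast
  qed
  have s2: "UU V w m j \<subseteq> UU V w i j"
  proof
    fix z assume z: "z \<in> UU V w m j"
    then obtain t where t: "m \<le> t" "t < j" "z \<in> Mx V (dd w t)" "z \<notin> Mx V (dd w j)" "z \<in> V"
      unfolding UU_mem by blast
    have "i \<le> t" using t(1) assms(3) by simp
    then show "z \<in> UU V w i j" using t unfolding UU_mem by blast
  qed
  have d: "UU V w i m \<inter> UU V w m j = {}"
  proof (rule ccontr)
    assume "UU V w i m \<inter> UU V w m j \<noteq> {}"
    then obtain z where z1: "z \<in> UU V w i m" and z2: "z \<in> UU V w m j" by blast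
    obtain t1 where t1: "i \<le> t1" "t1 < m" "z \<in> Mx V (dd w t1)" "z \<notin> Mx V (dd w m)"
      using z1 unfolding UU_mem by blast
    obtain t2 where t2: "m \<le> t2" "t2 < j" "z \<in> Mx V (dd w t2)"
      using z2 unfolding UU_mem by blast
    show False
    proof (cases "t2 = m")
      case True then show ?thesis using t1 t2 by simp
    next
      case False
      then have "m < t2" using t2(1) by simp
      then have "z \<in> Mx V (dd w m)"
        using contig[OF assms(1), of t1 m t2 z V] t1(1,2,3) t2(2,3) assms(2,5) by simp
      then show ?thesis using t1(4) by blast
    qed
  qed
  have f: "finite (UU V w i j)" using assms(6) unfolding UU_def by simp
  have f1: "finite (UU V w i m)" "finite (UU V w m j)" using f s1 s2 finite_subset by blast+
  have "card (UU V w i m) + card (UU V w m j) = card (UU V w i m \<union> UU V w m j)"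
    using d f1 by (simp add: card_Un_disjoint)
  also have "\<dots> \<le> card (UU V w i j)" using s1 s2 f by (intro card_mono) auto
  finally show ?thesis .
qed

lemma rec_cost:
  assumes "chainok w" "convex hull V \<subseteq> C" "\<forall>t<length w. w!t \<in> C \<longrightarrow> w!t \<in> convex hull V"
    "finite V"
  shows "1 \<le> i \<Longrightarrow> j < length w \<Longrightarrow> w!(i-1) \<in> C \<Longrightarrow> w!j \<in> C \<Longrightarrow> j - i \<le> 2^h \<Longrightarrow>
    length (fst (rec_call (\<lambda>x. x \<in> C) w i j)) \<le> 3 + 6 * card (UU V w i j) * h"
proof (induction h arbitrary: i j)
  case (0 i j)
  define q where "q = line_inter (w!(i-1)) (w!i) (w!(j-1)) (w!j)"
  define m where "m = (i + j) div 2"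
  show ?case
  proof (cases "j \<le> i")
    case True then show ?thesis by (simp add: rc_base)
  next
    case nj: False
    then have "j = i + 1" using 0 by auto
    then show ?thesis using nj
      by (cases "q \<in> C"; cases "w!(m-1) \<in> C"; cases "w!m \<in> C")
         (simp_all add: rc_in rc_x rc_y rc_leaf q_def m_def)
  qed
next
  case (Suc h i j)
  define q where "q = line_inter (w!(i-1)) (w!i) (w!(j-1)) (w!j)"
  define m where "m = (i + j) div 2"
  show ?case
  proof (cases "j \<le> i")
    case True then show ?thesis by (simp add: rc_base)
  next
    case nj: False
    show ?thesis
    proof (cases "q \<in> C")
      case True then show ?thesis using nj by (simp add: rc_in q_def)
    next
      case nq: False
      have "i - 1 < length w" using nj Suc.prems by auto
      then have A: "w!(i-1) \<in> convex hull V" "w!j \<in> convex hull V" using Suc.prems assms(3) by auto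
      then have Vne: "V \<noteq> {}" by auto
      have dis: "Mx V (dd w i) \<inter> Mx V (dd w j) = {}"
        by (rule charged[OF assms(1)]) (use Suc.prems nj A nq assms(2) q_def in auto)
      obtain z where z: "z \<in> Mx V (dd w i)" using Mx_ne[OF assms(4) Vne] by blast
      have "z \<in> UU V w i j" using z dis nj unfolding UU_def by (auto simp: Mx_def)
      moreover have "finite (UU V w i j)" using assms(4) unfolding UU_def by auto
      ultimately have U1: "card (UU V w i j) \<ge> 1"
        by (metis One_nat_def Suc_leI card_gt_0_iff empty_iff)
      show ?thesis
      proof (cases "w!(m-1) \<in> C \<and> w!m \<in> C \<and> j \<noteq> i + 1")
        case False
        then have "length (fst (rec_call (\<lambda>x. x \<in> C) w i j)) \<le> 3" using nj nq
          by (cases "w!(m-1) \<in> C"; cases "w!m \<in> C")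
             (auto simp add: rc_x rc_y rc_leaf q_def m_def)
        then show ?thesis by simp
      next
        case True
        have mi: "i < m" "m < j" using nj True unfolding m_def by auto
        have mlen: "m < length w" using mi Suc.prems by auto
        have h1: "m - i \<le> 2^h" "j - m \<le> 2^h" using Suc.prems(5) unfolding m_def by auto
        have IH1: "length (fst (rec_call (\<lambda>x. x \<in> C) w i m)) \<le> 3 + 6 * card (UU V w i m) * h"
          using Suc.IH[of i m] Suc.prems True mlen h1 by auto
        have IH2: "length (fst (rec_call (\<lambda>x. x \<in> C) w m j)) \<le> 3 + 6 * card (UU V w m j) * h"
          using Suc.IH[of m j] Suc.prems True mlen h1 mi by auto
        have e: "rec_call (\<lambda>x. x \<in> C) w i j = (let pre = [q, w!(m-1), w!m] in
           (case rec_call (\<lambda>x. x \<in> C) w i m of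
             (t1, Some p) \<Rightarrow> (pre @ t1, Some p)
           | (t1, None) \<Rightarrow> (case rec_call (\<lambda>x. x \<in> C) w m j of (t2, r2) \<Rightarrow> (pre @ t1 @ t2, r2))))"
          using rc_rec[of j i "\<lambda>x. x \<in> C" w] nj nq True by (simp add: q_def m_def)
        have L: "length (fst (rec_call (\<lambda>x. x \<in> C) w i j)) \<le>
            3 + length (fst (rec_call (\<lambda>x. x \<in> C) w i m)) + length (fst (rec_call (\<lambda>x. x \<in> C) w m j))"
          unfolding e
          by (cases "rec_call (\<lambda>x. x \<in> C) w i m"; cases "rec_call (\<lambda>x. x \<in> C) w m j")
             (auto simp: Let_def split: option.splits)
        have sp: "card (UU V w i m) + card (UU V w m j) \<le> card (UU V w i j)"
          by (rule UU_split[OF assms(1)]) (use Suc.prems mi assms(4) in auto)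
        have "3 + (3 + 6 * card (UU V w i m) * h) + (3 + 6 * card (UU V w m j) * h)
              = 9 + 6 * h * (card (UU V w i m) + card (UU V w m j))"
          by (simp add: algebra_simps)
        also have "\<dots> \<le> 9 + 6 * h * card (UU V w i j)" using sp by simp
        also have "\<dots> \<le> 3 + 6 * card (UU V w i j) * Suc h" using U1 by (simp add: algebra_simps)
        finally have "3 + (3 + 6 * card (UU V w i m) * h) + (3 + 6 * card (UU V w m j) * h)
              \<le> 3 + 6 * card (UU V w i j) * Suc h" .
        then show ?thesis using L IH1 IH2 by simp
      qed
    qed
  qed
qed



definition lexle :: "pt \<Rightarrow> pt \<Rightarrow> bool" where "lexle a b \<longleftrightarrow> a = b \<or> lexless a b"

lemma lex_irrefl[simp]: "\<not> lexless a a" by (simp add: lexless_def)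
lemma lex_trans: "lexless a b \<Longrightarrow> lexless b c \<Longrightarrow> lexless a c" by (auto simp: lexless_def)
lemma lex_asym: "lexless a b \<Longrightarrow> \<not> lexless b a" by (auto simp: lexless_def)
lemma lex_total: "a \<noteq> b \<Longrightarrow> lexless a b \<or> lexless b a" by (auto simp: lexless_def prod_eq_iff)
lemma lex_neg: "lexless (- a) (- b) \<longleftrightarrow> lexless b a" by (auto simp: lexless_def)

lemma lexmin_ex: "finite S \<Longrightarrow> S \<noteq> {} \<Longrightarrow> \<exists>m\<in>S. \<forall>y\<in>S. y \<noteq> m \<longrightarrow> lexless m y"
proof (induction S rule: finite_ne_induct)
  case (singleton x) then show ?case by auto
next
  case (insert x F)
  then obtain m where m: "m \<in> F" "\<forall>y\<in>F. y \<noteq> m \<longrightarrow> lexless m y" by auto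
  show ?case
  proof (cases "lexless x m")
    case True
    have "\<forall>y\<in>insert x F. y \<noteq> x \<longrightarrow> lexless x y"
    proof (intro ballI impI)
      fix y assume "y \<in> insert x F" "y \<noteq> x"
      then have "y \<in> F" by simp
      then show "lexless x y" using True m lex_trans by (cases "y = m") blast+
    qed
    then show ?thesis by blast
  next
    case False
    then have "x = m \<or> lexless m x" using lex_total by blast
    then show ?thesis using m by (intro bexI[of _ m]) auto
  qed
qed

lemma lexmax_ex: "finite S \<Longrightarrow> S \<noteq> {} \<Longrightarrow> \<exists>m\<in>S. \<forall>y\<in>S. y \<noteq> m \<longrightarrow> lexless y m"
proof (induction S rule: finite_ne_induct)
  case (singleton x) then show ?case by auto
next
  case (insert x F)
  then obtain m where m: "m \<in> F" "\<forall>y\<in>F. y \<noteq> m \<longrightarrow> lexless y m" by auto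
  show ?case
  proof (cases "lexless m x")
    case True
    have "\<forall>y\<in>insert x F. y \<noteq> x \<longrightarrow> lexless y x"
    proof (intro ballI impI)
      fix y assume "y \<in> insert x F" "y \<noteq> x"
      then have "y \<in> F" by simp
      then show "lexless y x" using True m lex_trans by (cases "y = m") blast+
    qed
    then show ?thesis by blast
  next
    case False
    then have "x = m \<or> lexless x m" using lex_total by blast
    then show ?thesis using m by (intro bexI[of _ m]) auto
  qed
qed

lemma sorted_ex: "finite S \<Longrightarrow> \<exists>w. sorted_wrt lexless w \<and> set w = S"
proof (induction S rule: finite_remove_induct)
  case empty then show ?case by auto
next
  case (remove A)
  obtain m where m: "m \<in> A" "\<forall>y\<in>A. y \<noteq> m \<longrightarrow> lexless m y" using lexmin_ex[OF remove(1,2)] by blast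
  obtain w where w: "sorted_wrt lexless w" "set w = A - {m}" using remove(4)[OF m(1)] by blast
  have "sorted_wrt lexless (m # w) \<and> set (m # w) = A" using w m by auto
  then show ?case by blast
qed

lemma sorted_unique: "sorted_wrt lexless xs \<Longrightarrow> sorted_wrt lexless ys \<Longrightarrow> set xs = set ys \<Longrightarrow> xs = ys"
proof (induction xs arbitrary: ys)
  case Nil then show ?case by auto
next
  case (Cons x xs)
  then obtain y ys' where ys: "ys = y # ys'" by (cases ys) auto
  have "x = y"
  proof (rule ccontr)
    assume "x \<noteq> y"
    then have "y \<in> set xs" "x \<in> set ys'" using Cons.prems ys by (auto simp: insert_eq_iff)
    then have "lexless x y" "lexless y x" using Cons.prems ys by auto
    then show False using lex_asym by blast
  qed
  moreover have "x \<notin> set xs" using Cons.prems by auto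
  moreover have "y \<notin> set ys'" using Cons.prems ys by auto
  ultimately have "set xs = set ys'" using Cons.prems ys by (metis Diff_insert_absorb list.simps(15))
  then have "xs = ys'" using Cons.IH Cons.prems ys by simp
  then show ?case using ys \<open>x = y\<close> by simp
qed

lemma the_sorted:
  assumes "finite S"
  shows "sorted_wrt lexless (THE w. sorted_wrt lexless w \<and> set w = S) \<and> set (THE w. sorted_wrt lexless w \<and> set w = S) = S"
proof -
  have "\<exists>!w. sorted_wrt lexless w \<and> set w = S" using sorted_ex[OF assms] sorted_unique by blast
  then show ?thesis by (rule theI')
qed

lemma sorted_distinct: "sorted_wrt lexless w \<Longrightarrow> distinct w"
  by (induction w) auto


lemma hv_sub: "hull_vertices P \<subseteq> P"
  unfolding hull_vertices_def using extreme_point_of_convex_hull by auto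

lemma hv_hull:
  assumes "finite P" shows "convex hull (hull_vertices P) = convex hull P"
proof -
  have c: "compact (convex hull P)" using assms by (simp add: compact_convex_hull finite_imp_compact)
  have e: "convex hull P = convex hull {x. x extreme_point_of (convex hull P)}"
    by (rule Krein_Milman_Minkowski[OF c convex_convex_hull])
  show ?thesis unfolding hull_vertices_def using e by (rule sym)
qed

lemma hv_finite: "finite P \<Longrightarrow> finite (hull_vertices P)"
  using hv_sub finite_subset by blast

lemma hv_ne:
  assumes "finite P" "P \<noteq> {}" shows "hull_vertices P \<noteq> {}"
proof
  assume "hull_vertices P = {}"
  then have "convex hull P = {}" using hv_hull[OF assms(1)] by simp
  then show False using assms(2) by simp
qed

lemma hv_extreme: "x \<in> hull_vertices P \<Longrightarrow> a \<in> convex hull P \<Longrightarrow> b \<in> convex hull P \<Longrightarrow> x \<notin> open_segment a b"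
  unfolding hull_vertices_def extreme_point_of_def by auto

lemma mem_neg_image: "x \<in> uminus ` S \<longleftrightarrow> - x \<in> (S::pt set)"
proof
  assume "x \<in> uminus ` S"
  then obtain y where "y \<in> S" "x = - y" by auto
  then show "- x \<in> S" by simp
next
  assume "- x \<in> S"
  then show "x \<in> uminus ` S" by (rule image_eqI[rotated]) simp
qed

lemma neg_open_segment: "- x \<in> open_segment a b \<longleftrightarrow> x \<in> open_segment (- a) (- (b::pt))"
proof -
  have e: "open_segment (- a) (- b) = uminus ` open_segment a b"
    by (rule open_segment_linear_image[OF linear_uminus]) (simp add: inj_def)
  show ?thesis unfolding e by (rule mem_neg_image[symmetric])
qed

lemma hv_neg: "hull_vertices (uminus ` P) = uminus ` hull_vertices P"
proof -
  have ch: "convex hull (uminus ` P) = uminus ` (convex hull P)"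
    by (rule convex_hull_linear_image[symmetric]) (rule linear_uminus)
  have "x extreme_point_of (uminus ` (convex hull P)) \<longleftrightarrow> - x extreme_point_of (convex hull P)" for x
  proof -
    have "x \<in> uminus ` (convex hull P) \<longleftrightarrow> - x \<in> convex hull P" by (rule mem_neg_image)
    moreover have "(\<forall>a\<in>uminus ` (convex hull P). \<forall>b\<in>uminus ` (convex hull P). x \<notin> open_segment a b)
       \<longleftrightarrow> (\<forall>a\<in>convex hull P. \<forall>b\<in>convex hull P. - x \<notin> open_segment a b)"
      by (auto simp: neg_open_segment)
    ultimately show ?thesis unfolding extreme_point_of_def by blast
  qed
  then show ?thesis unfolding hull_vertices_def ch by force
qed



lemma VS:
  fixes p b r :: pt
  assumes "fst p = fst b" "fst r = fst b" "snd p < snd b" "snd b < snd r"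
  shows "b \<in> open_segment p r"
proof -
  define u where "u = (snd b - snd p) / (snd r - snd p)"
  have u0: "0 < u" "u < 1" using assms unfolding u_def by (simp_all add: divide_pos_pos)
  have "snd b = (1 - u) * snd p + u * snd r"
  proof -
    have "u * (snd r - snd p) = snd b - snd p" using assms unfolding u_def by simp
    then show ?thesis by (simp add: algebra_simps)
  qed
  moreover have "fst b = (1 - u) * fst p + u * fst r" using assms by (simp add: algebra_simps)
  ultimately have "b = (1 - u) *\<^sub>R p + u *\<^sub>R r" by (simp add: prod_eq_iff)
  moreover have "p \<noteq> r" using assms by auto
  ultimately show ?thesis unfolding in_segment using u0 by blast
qed

lemma PS:
  fixes x0 x1 :: pt
  assumes "fst x0 < fst x1" "fst x0 \<le> X" "X \<le> fst x1"
  shows "\<exists>p \<in> closed_segment x0 x1. fst p = X \<and> (snd p - snd x0) * (fst x1 - fst x0) = (snd x1 - snd x0) * (X - fst x0)"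
proof -
  define u where "u = (X - fst x0) / (fst x1 - fst x0)"
  have u0: "0 \<le> u" "u \<le> 1" using assms unfolding u_def by (simp_all add: divide_nonneg_pos)
  define p where "p = (1 - u) *\<^sub>R x0 + u *\<^sub>R x1"
  have pc: "p \<in> closed_segment x0 x1" unfolding in_segment p_def using u0 by blast
  have uu: "u * (fst x1 - fst x0) = X - fst x0" using assms unfolding u_def by simp
  have "fst p = X" using uu unfolding p_def by (simp add: algebra_simps)
  moreover have "(snd p - snd x0) * (fst x1 - fst x0) = (snd x1 - snd x0) * (X - fst x0)"
  proof -
    have "snd p - snd x0 = u * (snd x1 - snd x0)" unfolding p_def by (simp add: algebra_simps)
    then show ?thesis using uu by (metis mult.assoc mult.commute)
  qed
  ultimately show ?thesis using pc by blast
qed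

lemma G:
  assumes "lexle v a" "lexless a b" "lexless b c" "lexle c v'"
    "cross2 (v' - v) (b - v) > 0" "cross2 (b - a) (c - b) \<ge> 0"
  shows "\<exists>x\<in>convex hull {v, v', a, c}. \<exists>y\<in>convex hull {v, v', a, c}. b \<in> open_segment x y"
proof -
  let ?K = "convex hull {v, v', a, c}"
  have svv: "closed_segment v v' \<subseteq> ?K" unfolding segment_convex_hull by (rule hull_mono) auto
  have sac: "closed_segment a c \<subseteq> ?K" unfolding segment_convex_hull by (rule hull_mono) auto
  have aK: "a \<in> ?K" "c \<in> ?K" by (auto intro: hull_inc)
  have h1: "fst v \<le> fst a" using assms(1) by (auto simp: lexle_def lexless_def)
  have h4: "fst c \<le> fst v'" using assms(4) by (auto simp: lexle_def lexless_def)
  have hab: "fst a < fst b \<or> (fst a = fst b \<and> snd a < snd b)" using assms(2) by (simp add: lexless_def)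
  have hbc: "fst b < fst c \<or> (fst b = fst c \<and> snd b < snd c)" using assms(3) by (simp add: lexless_def)
  have cr1: "(fst v' - fst v) * (snd b - snd v) - (snd v' - snd v) * (fst b - fst v) > 0"
    using assms(5) by (simp add: cross2_def)
  have cr2: "(fst b - fst a) * (snd c - snd b) - (snd b - snd a) * (fst c - fst b) \<ge> 0"
    using assms(6) by (simp add: cross2_def)
  show ?thesis
  proof (cases "fst a = fst b")
    case True
    then have ab: "snd a < snd b" using hab by simp
    have "fst c = fst b"
    proof (rule ccontr)
      assume "fst c \<noteq> fst b"
      then have "fst b < fst c" using hbc by auto
      then have "(snd b - snd a) * (fst c - fst b) > 0" using ab by simp
      then show False using cr2 True by simp
    qed
    then have "snd b < snd c" using hbc by simp
    then have "b \<in> open_segment a c" using True ab \<open>fst c = fst b\<close> by (intro VS) argo+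
    then show ?thesis using aK by blast
  next
    case False
    then have ab: "fst a < fst b" using hab by simp
    have bc: "fst b \<le> fst c" using hbc by auto
    have vv: "fst v < fst v'" using h1 ab bc h4 by simp
    obtain p where p: "p \<in> closed_segment v v'" "fst p = fst b"
      "(snd p - snd v) * (fst v' - fst v) = (snd v' - snd v) * (fst b - fst v)"
      using PS[of v v' "fst b"] vv h1 ab bc h4 by auto
    have "(snd p - snd v) * (fst v' - fst v) < (snd b - snd v) * (fst v' - fst v)"
      using p(3) cr1 by (simp add: algebra_simps)
    then have pb: "snd p < snd b" using vv by (simp add: mult_less_cancel_right)
    have pK: "p \<in> ?K" using p(1) svv by auto
    show ?thesis
    proof (cases "fst b = fst c")
      case True
      then have "snd b < snd c" using hbc by simp
      then have "b \<in> open_segment p c" using True p(2) pb by (intro VS) argo+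
      then show ?thesis using pK aK by blast
    next
      case False
      then have bc': "fst b < fst c" using bc by simp
      obtain r where r: "r \<in> closed_segment a c" "fst r = fst b"
        "(snd r - snd a) * (fst c - fst a) = (snd c - snd a) * (fst b - fst a)"
        using PS[of a c "fst b"] ab bc' by auto
      have "(snd r - snd b) * (fst c - fst a) = (fst b - fst a) * (snd c - snd b) - (snd b - snd a) * (fst c - fst b)"
        using r(3) by (simp add: algebra_simps)
      then have "(snd r - snd b) * (fst c - fst a) \<ge> 0" using cr2 by simp
      then have rb: "snd r \<ge> snd b" using ab bc' by (simp add: zero_le_mult_iff)
      have rK: "r \<in> ?K" using r(1) sac by auto
      show ?thesis
      proof (cases "snd r = snd b")
        case True
        then have "r = b" using r(2) by (simp add: prod_eq_iff)
        then have "b \<in> closed_segment a c" using r(1) by simp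
        moreover have "b \<noteq> a" "b \<noteq> c" using assms(2,3) by auto
        ultimately have "b \<in> open_segment a c" unfolding open_segment_def by simp
        then show ?thesis using aK by blast
      next
        case False
        then have "snd b < snd r" using rb by simp
        then have "b \<in> open_segment p r" using p(2) r(2) pb by (intro VS) argo+
        then show ?thesis using pK rK by blast
      qed
    qed
  qed
qed

lemma collinear_seg:
  assumes "lexless v u" "lexless u v'" "cross2 (v' - v) (u - v) = 0"
  shows "u \<in> open_segment v v'"
proof -
  have cr: "(fst v' - fst v) * (snd u - snd v) = (snd v' - snd v) * (fst u - fst v)"
    using assms(3) by (simp add: cross2_def)
  have vu: "fst v \<le> fst u" "fst u \<le> fst v'" using assms(1,2) by (auto simp: lexless_def)
  show ?thesis
  proof (cases "fst v = fst v'")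
    case True
    then have "fst u = fst v" using vu by simp
    have l1: "fst v < fst u \<or> (fst v = fst u \<and> snd v < snd u)" using assms(1) unfolding lexless_def .
    have l2: "fst u < fst v' \<or> (fst u = fst v' \<and> snd u < snd v')" using assms(2) unfolding lexless_def .
    have "snd v < snd u" using l1 \<open>fst u = fst v\<close> by simp
    moreover have "snd u < snd v'" using l2 \<open>fst u = fst v\<close> True by simp
    ultimately have s1: "snd v < snd u" "snd u < snd v'" by simp_all
    have f1: "fst v = fst u" "fst v' = fst u" using True \<open>fst u = fst v\<close> by simp_all
    show ?thesis by (rule VS[OF f1 s1])
  next
    case False
    then have vv: "fst v < fst v'" using vu by simp
    obtain p where p: "p \<in> closed_segment v v'" "fst p = fst u"
      "(snd p - snd v) * (fst v' - fst v) = (snd v' - snd v) * (fst u - fst v)"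
      using PS[of v v' "fst u"] vv vu by auto
    have "(snd p - snd v) * (fst v' - fst v) = (snd u - snd v) * (fst v' - fst v)"
      using p(3) cr by (simp add: algebra_simps)
    then have "snd p = snd u" using vv by simp
    then have "p = u" using p(2) by (simp add: prod_eq_iff)
    then have "u \<in> closed_segment v v'" using p(1) by simp
    moreover have "u \<noteq> v" "u \<noteq> v'" using assms(1,2) by auto
    ultimately show ?thesis unfolding open_segment_def by simp
  qed
qed

definition dirH :: "pt \<Rightarrow> bool" where "dirH d \<longleftrightarrow> fst d > 0 \<or> (fst d = 0 \<and> snd d > 0)"

lemma lex_dirH: "lexless a b \<Longrightarrow> dirH (b - a)"
  by (auto simp: lexless_def dirH_def)

lemma trans_H:
  assumes "dirH u" "dirH v" "dirH x" "cross2 u v < 0" "cross2 v x < 0"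
  shows "cross2 u x < 0"
proof -
  have u: "fst u \<ge> 0" and v: "fst v \<ge> 0" and x: "fst x \<ge> 0" using assms(1-3) by (auto simp: dirH_def)
  have c1: "fst u * snd v < snd u * fst v" using assms(4) by (simp add: cross2_def)
  have c2: "fst v * snd x < snd v * fst x" using assms(5) by (simp add: cross2_def)
  have v1: "fst v > 0"
  proof (rule ccontr)
    assume "\<not> fst v > 0"
    then have "fst v = 0" "snd v > 0" using assms(2) by (auto simp: dirH_def)
    then have "fst u * snd v < 0" using c1 by simp
    then show False using u \<open>snd v > 0\<close> by (simp add: mult_less_0_iff)
  qed
  show ?thesis
  proof (cases "fst u = 0 \<and> fst x = 0")
    case True
    then have "snd x > 0" using assms(3) by (auto simp: dirH_def)
    then have "fst v * snd x > 0" using v1 by simp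
    then show ?thesis using c2 True by simp
  next
    case False
    have e1: "fst u * (fst v * snd x) \<le> fst u * (snd v * fst x)" using c2 u by (intro mult_left_mono) auto
    have e2: "fst x * (fst u * snd v) \<le> fst x * (snd u * fst v)" using c1 x by (intro mult_left_mono) auto
    have s: "fst u * (fst v * snd x) < fst u * (snd v * fst x) \<or> fst x * (fst u * snd v) < fst x * (snd u * fst v)"
    proof (cases "fst u > 0")
      case True then show ?thesis using c2 by (simp add: mult_strict_left_mono)
    next
      case False
      then have "fst x > 0" using \<open>\<not> (fst u = 0 \<and> fst x = 0)\<close> u x by auto
      then show ?thesis using c1 by (simp add: mult_strict_left_mono)
    qed
    have "fst v * (fst u * snd x - snd u * fst x) < 0"
      using e1 e2 s by (auto simp: algebra_simps)
    then have "fst u * snd x - snd u * fst x < 0" using v1 by (simp add: mult_less_0_iff)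
    then show ?thesis by (simp add: cross2_def)
  qed
qed



lemma lm_ex1:
  assumes "finite P" "P \<noteq> {}"
  shows "\<exists>!x. x \<in> hull_vertices P \<and> (\<forall>y\<in>hull_vertices P. y \<noteq> x \<longrightarrow> lexless x y)"
proof -
  obtain m where m: "m \<in> hull_vertices P" "\<forall>y\<in>hull_vertices P. y \<noteq> m \<longrightarrow> lexless m y"
    using lexmin_ex[OF hv_finite[OF assms(1)] hv_ne[OF assms]] by blast
  show ?thesis
  proof (rule ex1I[of _ m])
    show "m \<in> hull_vertices P \<and> (\<forall>y\<in>hull_vertices P. y \<noteq> m \<longrightarrow> lexless m y)" using m by blast
  next
    fix x assume x: "x \<in> hull_vertices P \<and> (\<forall>y\<in>hull_vertices P. y \<noteq> x \<longrightarrow> lexless x y)"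
    show "x = m"
    proof (rule ccontr)
      assume "x \<noteq> m"
      then have "lexless x m" "lexless m x" using x m by auto
      then show False using lex_asym by blast
    qed
  qed
qed

lemma rm_ex1:
  assumes "finite P" "P \<noteq> {}"
  shows "\<exists>!x. x \<in> hull_vertices P \<and> (\<forall>y\<in>hull_vertices P. y \<noteq> x \<longrightarrow> lexless y x)"
proof -
  obtain m where m: "m \<in> hull_vertices P" "\<forall>y\<in>hull_vertices P. y \<noteq> m \<longrightarrow> lexless y m"
    using lexmax_ex[OF hv_finite[OF assms(1)] hv_ne[OF assms]] by blast
  show ?thesis
  proof (rule ex1I[of _ m])
    show "m \<in> hull_vertices P \<and> (\<forall>y\<in>hull_vertices P. y \<noteq> m \<longrightarrow> lexless y m)" using m by blast
  next
    fix x assume x: "x \<in> hull_vertices P \<and> (\<forall>y\<in>hull_vertices P. y \<noteq> x \<longrightarrow> lexless y x)"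
    show "x = m"
    proof (rule ccontr)
      assume "x \<noteq> m"
      then have "lexless x m" "lexless m x" using x m by auto
      then show False using lex_asym by blast
    qed
  qed
qed

lemma lm_prop:
  assumes "finite P" "P \<noteq> {}"
  shows "leftmost P \<in> hull_vertices P \<and> (\<forall>y\<in>hull_vertices P. y \<noteq> leftmost P \<longrightarrow> lexless (leftmost P) y)"
  unfolding leftmost_def by (rule theI'[OF lm_ex1[OF assms]])

lemma rm_prop:
  assumes "finite P" "P \<noteq> {}"
  shows "rightmost P \<in> hull_vertices P \<and> (\<forall>y\<in>hull_vertices P. y \<noteq> rightmost P \<longrightarrow> lexless y (rightmost P))"
  unfolding rightmost_def by (rule theI'[OF rm_ex1[OF assms]])

lemma lm_neg:
  assumes "finite P" "P \<noteq> {}"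
  shows "leftmost (uminus ` P) = - rightmost P"
proof -
  have f: "finite (uminus ` P)" "uminus ` P \<noteq> {}" using assms by auto
  have H: "hull_vertices (uminus ` P) = uminus ` hull_vertices P" by (rule hv_neg)
  have r: "rightmost P \<in> hull_vertices P" "\<forall>y\<in>hull_vertices P. y \<noteq> rightmost P \<longrightarrow> lexless y (rightmost P)"
    using rm_prop[OF assms] by auto
  have p: "- rightmost P \<in> hull_vertices (uminus ` P) \<and>
     (\<forall>y\<in>hull_vertices (uminus ` P). y \<noteq> - rightmost P \<longrightarrow> lexless (- rightmost P) y)"
  proof
    show "- rightmost P \<in> hull_vertices (uminus ` P)" unfolding H using r(1) by simp
    show "\<forall>y\<in>hull_vertices (uminus ` P). y \<noteq> - rightmost P \<longrightarrow> lexless (- rightmost P) y"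
    proof (intro ballI impI)
      fix y assume y: "y \<in> hull_vertices (uminus ` P)" "y \<noteq> - rightmost P"
      then obtain z where z: "z \<in> hull_vertices P" "y = - z" unfolding H by auto
      then have "z \<noteq> rightmost P" using y(2) by auto
      then have "lexless z (rightmost P)" using r(2) z(1) by auto
      then show "lexless (- rightmost P) y" using z(2) by (simp add: lex_neg)
    qed
  qed
  show ?thesis unfolding leftmost_def
    by (rule the1_equality[OF lm_ex1[OF f] p])
qed

lemma rm_neg:
  assumes "finite P" "P \<noteq> {}"
  shows "rightmost (uminus ` P) = - leftmost P"
proof -
  have f: "finite (uminus ` P)" "uminus ` P \<noteq> {}" using assms by auto
  have H: "hull_vertices (uminus ` P) = uminus ` hull_vertices P" by (rule hv_neg)
  have r: "leftmost P \<in> hull_vertices P" "\<forall>y\<in>hull_vertices P. y \<noteq> leftmost P \<longrightarrow> lexless (leftmost P) y"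
    using lm_prop[OF assms] by auto
  have p: "- leftmost P \<in> hull_vertices (uminus ` P) \<and>
     (\<forall>y\<in>hull_vertices (uminus ` P). y \<noteq> - leftmost P \<longrightarrow> lexless y (- leftmost P))"
  proof
    show "- leftmost P \<in> hull_vertices (uminus ` P)" unfolding H using r(1) by simp
    show "\<forall>y\<in>hull_vertices (uminus ` P). y \<noteq> - leftmost P \<longrightarrow> lexless y (- leftmost P)"
    proof (intro ballI impI)
      fix y assume y: "y \<in> hull_vertices (uminus ` P)" "y \<noteq> - leftmost P"
      then obtain z where z: "z \<in> hull_vertices P" "y = - z" unfolding H by auto
      then have "z \<noteq> leftmost P" using y(2) by auto
      then have "lexless (leftmost P) z" using r(2) z(1) by auto
      then show "lexless y (- leftmost P)" using z(2) by (simp add: lex_neg)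
    qed
  qed
  show ?thesis unfolding rightmost_def
    by (rule the1_equality[OF rm_ex1[OF f] p])
qed

definition upset :: "pt set \<Rightarrow> pt set" where
  "upset P = {u \<in> hull_vertices P. u = leftmost P \<or> u = rightmost P \<or>
                 cross2 (rightmost P - leftmost P) (u - leftmost P) > 0}"

lemma uc_sorted:
  assumes "finite P"
  shows "sorted_wrt lexless (upper_chain P) \<and> set (upper_chain P) = upset P"
proof -
  have "finite (upset P)" unfolding upset_def using hv_finite[OF assms] by simp
  then show ?thesis unfolding upper_chain_def upset_def[symmetric] by (rule the_sorted)
qed

lemma uc_basic:
  assumes "finite P" "P \<noteq> {}"
  defines "w \<equiv> upper_chain P"
  shows "set w \<subseteq> hull_vertices P" "set w \<subseteq> P" "leftmost P \<in> set w" "rightmost P \<in> set w"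
    "w \<noteq> []" "w!0 = leftmost P" "w!(length w - 1) = rightmost P" "distinct w"
proof -
  have s: "sorted_wrt lexless w" "set w = upset P" using uc_sorted[OF assms(1)] unfolding w_def by auto
  have l: "leftmost P \<in> hull_vertices P" "\<forall>y\<in>hull_vertices P. y \<noteq> leftmost P \<longrightarrow> lexless (leftmost P) y"
    using lm_prop[OF assms(1,2)] by auto
  have r: "rightmost P \<in> hull_vertices P" "\<forall>y\<in>hull_vertices P. y \<noteq> rightmost P \<longrightarrow> lexless y (rightmost P)"
    using rm_prop[OF assms(1,2)] by auto
  show sh: "set w \<subseteq> hull_vertices P" using s(2) unfolding upset_def by auto
  then show "set w \<subseteq> P" using hv_sub by blast
  show lw: "leftmost P \<in> set w" using s(2) l(1) unfolding upset_def by auto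
  show rw: "rightmost P \<in> set w" using s(2) r(1) unfolding upset_def by auto
  show "w \<noteq> []" using lw by auto
  show d: "distinct w" using s(1) by (rule sorted_distinct)
  show "w!0 = leftmost P"
  proof (rule ccontr)
    assume ne: "w!0 \<noteq> leftmost P"
    obtain k where k: "k < length w" "w!k = leftmost P" using lw by (auto simp: in_set_conv_nth)
    have "k \<noteq> 0"
    proof
      assume "k = 0" then show False using k ne by simp
    qed
    then have "0 < k" by simp
    then have "lexless (w!0) (leftmost P)" using sorted_wrt_nth_less[OF s(1), of 0 k] k by simp
    moreover have "w!0 \<in> hull_vertices P" using subsetD[OF sh, OF nth_mem[of 0 w]] k(1) by (cases w) auto
    then have "lexless (leftmost P) (w!0)" using l(2) ne by auto
    ultimately show False using lex_asym by blast
  qed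
  show "w!(length w - 1) = rightmost P"
  proof (rule ccontr)
    assume ne: "w!(length w - 1) \<noteq> rightmost P"
    obtain k where k: "k < length w" "w!k = rightmost P" using rw by (auto simp: in_set_conv_nth)
    have "k \<noteq> length w - 1"
    proof
      assume "k = length w - 1" then show False using k ne by simp
    qed
    then have "k < length w - 1" using k by simp
    then have "lexless (rightmost P) (w!(length w - 1))" using sorted_wrt_nth_less[OF s(1), of k "length w - 1"] k by simp
    moreover have "w!(length w - 1) \<in> hull_vertices P" using subsetD[OF sh, OF nth_mem[of "length w - 1" w]] k(1) by (cases w) auto
    then have "lexless (w!(length w - 1)) (rightmost P)" using r(2) ne by auto
    ultimately show False using lex_asym by blast
  qed
qed

lemma uc_interior:
  assumes "finite P" "P \<noteq> {}" "0 < t" "t < length (upper_chain P) - 1"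
  shows "cross2 (rightmost P - leftmost P) (upper_chain P ! t - leftmost P) > 0"
proof -
  let ?w = "upper_chain P"
  have s: "set ?w = upset P" using uc_sorted[OF assms(1)] by auto
  note b = uc_basic[OF assms(1,2)]
  have "t < length ?w" "?w \<noteq> []" using assms(4) by auto
  then have "?w ! t \<noteq> ?w ! 0" using nth_eq_iff_index_eq[OF b(8), of t 0] assms(3) by simp
  then have n1: "?w ! t \<noteq> leftmost P" using b(6) by simp
  have "?w ! t \<noteq> ?w ! (length ?w - 1)" using nth_eq_iff_index_eq[OF b(8), of t "length ?w - 1"] assms(3,4) by simp
  then have n2: "?w ! t \<noteq> rightmost P" using b(7) by simp
  have "?w ! t \<in> set ?w" using nth_mem \<open>t < length ?w\<close> by blast
  then have "?w ! t \<in> upset P" using s by simp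
  then show ?thesis using n1 n2 unfolding upset_def by auto
qed

lemma uc_consec:
  assumes "finite P" "P \<noteq> {}" "1 \<le> t" "t + 1 < length (upper_chain P)"
  shows "cross2 (dd (upper_chain P) t) (dd (upper_chain P) (t + 1)) < 0"
proof (rule ccontr)
  let ?w = "upper_chain P"
  let ?a = "?w ! (t - 1)" and ?b = "?w ! t" and ?c = "?w ! (t + 1)"
  let ?v = "leftmost P" and ?v' = "rightmost P"
  assume "\<not> cross2 (dd ?w t) (dd ?w (t + 1)) < 0"
  then have c: "cross2 (?b - ?a) (?c - ?b) \<ge> 0" by (simp add: dd_def)
  have s: "sorted_wrt lexless ?w" using uc_sorted[OF assms(1)] by auto
  note bb = uc_basic[OF assms(1,2)]
  have ab: "lexless ?a ?b" using sorted_wrt_nth_less[OF s, of "t - 1" t] assms by simp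
  have bc: "lexless ?b ?c" using sorted_wrt_nth_less[OF s, of t "t + 1"] assms by simp
  have "t - 1 < length ?w" "t < length ?w" "t + 1 < length ?w" using assms by auto
  then have inH: "?a \<in> hull_vertices P" "?b \<in> hull_vertices P" "?c \<in> hull_vertices P"
    using subsetD[OF bb(1), OF nth_mem] by blast+
  have l: "\<forall>y\<in>hull_vertices P. y \<noteq> ?v \<longrightarrow> lexless ?v y" using lm_prop[OF assms(1,2)] by auto
  have r: "\<forall>y\<in>hull_vertices P. y \<noteq> ?v' \<longrightarrow> lexless y ?v'" using rm_prop[OF assms(1,2)] by auto
  have va: "lexle ?v ?a" using l inH(1) unfolding lexle_def by auto
  have cv: "lexle ?c ?v'" using r inH(3) unfolding lexle_def by auto
  have cr: "cross2 (?v' - ?v) (?b - ?v) > 0" using uc_interior[OF assms(1,2), of t] assms by simp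
  obtain x y where xy: "x \<in> convex hull {?v, ?v', ?a, ?c}" "y \<in> convex hull {?v, ?v', ?a, ?c}" "?b \<in> open_segment x y"
    using G[OF va ab bc cv cr c] by blast
  have "{?v, ?v', ?a, ?c} \<subseteq> P" using bb(2,3,4) inH hv_sub by auto
  then have K: "convex hull {?v, ?v', ?a, ?c} \<subseteq> convex hull P" by (rule hull_mono)
  have "x \<in> convex hull P" using xy(1) K by (rule rev_subsetD)
  moreover have "y \<in> convex hull P" using xy(2) K by (rule rev_subsetD)
  ultimately have "?b \<notin> open_segment x y" by (rule hv_extreme[OF inH(2)])
  then show False using xy(3) by simp
qed

lemma uc_dirH:
  assumes "finite P" "1 \<le> t" "t < length (upper_chain P)"
  shows "dirH (dd (upper_chain P) t)"
proof -
  have s: "sorted_wrt lexless (upper_chain P)" using uc_sorted[OF assms(1)] by auto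
  have "lexless (upper_chain P ! (t - 1)) (upper_chain P ! t)"
    using sorted_wrt_nth_less[OF s, of "t - 1" t] assms by simp
  then show ?thesis unfolding dd_def by (rule lex_dirH)
qed

lemma uc_chainok:
  assumes "finite P" "P \<noteq> {}"
  shows "chainok (upper_chain P)"
proof -
  let ?w = "upper_chain P"
  have main: "\<And>n s. 1 \<le> s \<Longrightarrow> s + Suc n < length ?w \<Longrightarrow> cross2 (dd ?w s) (dd ?w (s + Suc n)) < 0"
  proof -
    fix n s :: nat
    show "1 \<le> s \<Longrightarrow> s + Suc n < length ?w \<Longrightarrow> cross2 (dd ?w s) (dd ?w (s + Suc n)) < 0"
    proof (induction n)
      case 0
      then show ?case using uc_consec[OF assms, of s] by simp
    next
      case (Suc n)
      have h1: "cross2 (dd ?w s) (dd ?w (s + Suc n)) < 0" using Suc by simp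
      have h2: "cross2 (dd ?w (s + Suc n)) (dd ?w (s + Suc n + 1)) < 0"
        using uc_consec[OF assms, of "s + Suc n"] Suc.prems by simp
      have d: "dirH (dd ?w s)" "dirH (dd ?w (s + Suc n))" "dirH (dd ?w (s + Suc n + 1))"
        using uc_dirH[OF assms(1)] Suc.prems by auto
      show ?case using trans_H[OF d h1 h2] by simp
    qed
  qed
  show ?thesis unfolding chainok_def
  proof (intro allI impI)
    fix s r assume sr: "1 \<le> s \<and> s < r \<and> r < length ?w"
    then have "r = s + Suc (r - s - 1)" by simp
    then show "cross2 (dd ?w s) (dd ?w r) < 0" using main[of s "r - s - 1"] sr by simp
  qed
qed



lemma neg_fun_eq: "(\<lambda>q. - q \<in> C) = (\<lambda>x. x \<in> uminus ` (C::pt set))"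
  by (rule ext) (simp add: mem_neg_image)

definition initq :: "pt set \<Rightarrow> pt list" where
  "initq P = [leftmost P, rightmost P] @ end_nbrs (upper_chain P)
                 @ map uminus (end_nbrs (upper_chain (uminus ` P)))"

definition UR :: "pt set \<Rightarrow> pt set \<Rightarrow> pt list \<times> pt option" where
  "UR C P = rec_call (\<lambda>x. x \<in> C) (upper_chain P) 1 (length (upper_chain P) - 1)"

definition LR :: "pt set \<Rightarrow> pt set \<Rightarrow> pt list \<times> pt option" where
  "LR C P = UR (uminus ` C) (uminus ` P)"

lemma classify_a: "find (\<lambda>q. q \<notin> C) (initq P) = Some p \<Longrightarrow> classify C P = (initq P, Some p)"
  unfolding classify_def initq_def Let_def by simp

lemma classify_b: "find (\<lambda>q. q \<notin> C) (initq P) = None \<Longrightarrow> snd (UR C P) = Some p \<Longrightarrow>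
   classify C P = (initq P @ fst (UR C P), Some p)"
  unfolding classify_def initq_def[symmetric] Let_def upper_part_def UR_def[symmetric]
  by (cases "UR C P") simp

lemma classify_c: "find (\<lambda>q. q \<notin> C) (initq P) = None \<Longrightarrow> snd (UR C P) = None \<Longrightarrow>
   classify C P = (initq P @ fst (UR C P) @ map uminus (fst (LR C P)), map_option uminus (snd (LR C P)))"
  unfolding classify_def initq_def[symmetric] Let_def upper_part_def UR_def[symmetric] lower_part_def
    neg_fun_eq LR_def[symmetric]
  by (cases "UR C P"; cases "LR C P") simp

lemma end_nbrs_sub: "set (end_nbrs w) \<subseteq> set w"
  unfolding end_nbrs_def by auto

lemma end_nbrs_len: "length (end_nbrs w) \<le> 2"
  unfolding end_nbrs_def by auto

lemma initq_len: "length (initq P) \<le> 6"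
  unfolding initq_def using end_nbrs_len[of "upper_chain P"] end_nbrs_len[of "upper_chain (uminus ` P)"] by simp

lemma neg_neg_img: "uminus ` uminus ` (P::pt set) = P"
  by (simp add: image_image)

lemma uc_neg_sub:
  assumes "finite P" "P \<noteq> {}"
  shows "uminus ` set (upper_chain (uminus ` P)) \<subseteq> P"
proof -
  have "set (upper_chain (uminus ` P)) \<subseteq> uminus ` P" using uc_basic(2)[of "uminus ` P"] assms by simp
  then have "uminus ` set (upper_chain (uminus ` P)) \<subseteq> uminus ` uminus ` P" by (rule image_mono)
  then show ?thesis by (simp only: neg_neg_img)
qed

lemma initq_sub:
  assumes "finite P" "P \<noteq> {}"
  shows "set (initq P) \<subseteq> P"
proof -
  have a: "leftmost P \<in> P" "rightmost P \<in> P" using lm_prop[OF assms] rm_prop[OF assms] hv_sub by auto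
  have b: "set (end_nbrs (upper_chain P)) \<subseteq> P" using end_nbrs_sub uc_basic(2)[OF assms] by blast
  have "set (map uminus (end_nbrs (upper_chain (uminus ` P)))) \<subseteq> uminus ` set (upper_chain (uminus ` P))"
    using end_nbrs_sub by auto
  then have c: "set (map uminus (end_nbrs (upper_chain (uminus ` P)))) \<subseteq> P" using uc_neg_sub[OF assms] by blast
  show ?thesis unfolding initq_def using a b c by simp
qed

lemma hv_cover:
  assumes "finite P" "P \<noteq> {}"
  shows "hull_vertices P \<subseteq> set (upper_chain P) \<union> uminus ` set (upper_chain (uminus ` P))"
proof
  fix u assume u: "u \<in> hull_vertices P"
  let ?v = "leftmost P" and ?v' = "rightmost P"
  have fn: "finite (uminus ` P)" "uminus ` P \<noteq> {}" using assms by auto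
  have s1: "set (upper_chain P) = upset P" using uc_sorted[OF assms(1)] by auto
  have s2: "set (upper_chain (uminus ` P)) = upset (uminus ` P)" using uc_sorted[OF fn(1)] by auto
  have l: "?v \<in> hull_vertices P" "\<forall>y\<in>hull_vertices P. y \<noteq> ?v \<longrightarrow> lexless ?v y" using lm_prop[OF assms] by auto
  have r: "?v' \<in> hull_vertices P" "\<forall>y\<in>hull_vertices P. y \<noteq> ?v' \<longrightarrow> lexless y ?v'" using rm_prop[OF assms] by auto
  consider "u = ?v \<or> u = ?v' \<or> cross2 (?v' - ?v) (u - ?v) > 0" | "cross2 (?v' - ?v) (u - ?v) < 0"
    | "u \<noteq> ?v" "u \<noteq> ?v'" "cross2 (?v' - ?v) (u - ?v) = 0" by linarith
  then show "u \<in> set (upper_chain P) \<union> uminus ` set (upper_chain (uminus ` P))"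
  proof cases
    case 1 then show ?thesis using u s1 unfolding upset_def by auto
  next
    case 2
    have "cross2 (rightmost (uminus ` P) - leftmost (uminus ` P)) (- u - leftmost (uminus ` P))
        = cross2 (?v' - ?v) (?v' - u)"
      unfolding lm_neg[OF assms] rm_neg[OF assms] by (simp add: cross2_def algebra_simps)
    also have "\<dots> = - cross2 (?v' - ?v) (u - ?v)" by (simp add: cross2_def algebra_simps)
    finally have "cross2 (rightmost (uminus ` P) - leftmost (uminus ` P)) (- u - leftmost (uminus ` P)) > 0"
      using 2 by simp
    moreover have "- u \<in> hull_vertices (uminus ` P)" unfolding hv_neg using u by simp
    ultimately have "- u \<in> upset (uminus ` P)" unfolding upset_def by simp
    then have "- u \<in> set (upper_chain (uminus ` P))" using s2 by simp
    then have "u \<in> uminus ` set (upper_chain (uminus ` P))" by (simp add: mem_neg_image)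
    then show ?thesis by simp
  next
    case 3
    have "lexless ?v u" "lexless u ?v'" using 3 l r u by auto
    then have os: "u \<in> open_segment ?v ?v'" using collinear_seg 3(3) by blast
    have "?v \<in> convex hull P" "?v' \<in> convex hull P" using l(1) r(1) hv_sub by (auto intro: hull_inc)
    then have "u \<notin> open_segment ?v ?v'" by (rule hv_extreme[OF u])
    then show ?thesis using os by simp
  qed
qed

lemma log_h:
  assumes "n \<ge> (1::nat)"
  shows "\<exists>h::nat. n \<le> 2^h \<and> real h \<le> log 2 (real n) + 1"
proof -
  have l0: "log 2 (real n) \<ge> 0" using assms by simp
  define h where "h = nat \<lceil>log 2 (real n)\<rceil>"
  have hh: "real h = of_int \<lceil>log 2 (real n)\<rceil>" unfolding h_def using l0 by simp
  have "real h \<le> log 2 (real n) + 1" unfolding hh by (rule of_int_ceiling_le_add_one)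
  moreover have "real n \<le> 2 powr (real h)"
  proof -
    have "real n = 2 powr (log 2 (real n))" using assms by simp
    also have "\<dots> \<le> 2 powr (real h)" unfolding hh by (intro powr_mono) (auto intro: le_of_int_ceiling)
    finally show ?thesis .
  qed
  then have "real n \<le> real (2^h)" by (simp add: powr_realpow)
  then have "n \<le> 2^h" by (simp only: of_nat_le_iff)
  ultimately show ?thesis by blast
qed

lemma fence_ex:
  assumes "convex C" "finite P"
  shows "\<exists>V. finite V \<and> card V = inner_fence_size C P \<and> convex hull V \<subseteq> C \<and> C \<inter> P = convex hull V \<inter> P"
proof -
  let ?Q = "\<lambda>k. \<exists>V. finite V \<and> card V = k \<and> convex hull V \<subseteq> C \<and> C \<inter> P = convex hull V \<inter> P"
  have "convex hull (C \<inter> P) \<subseteq> C" using assms by (intro hull_minimal) auto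
  moreover have "C \<inter> P = convex hull (C \<inter> P) \<inter> P"
    using \<open>convex hull (C \<inter> P) \<subseteq> C\<close> hull_subset[of "C \<inter> P" convex] by blast
  ultimately have "?Q (card (C \<inter> P))" using assms(2) by blast
  then have "?Q (LEAST k. ?Q k)" by (rule LeastI)
  then show ?thesis unfolding inner_fence_size_def .
qed



lemma find_SomeD': "find Q xs = Some x \<Longrightarrow> x \<in> set xs \<and> Q x"
  by (induction xs) (auto split: if_splits)

lemma find_NoneD': "find Q xs = None \<Longrightarrow> x \<in> set xs \<Longrightarrow> \<not> Q x"
  by (induction xs) (auto split: if_splits)

lemma convex_neg: "convex C \<Longrightarrow> convex (uminus ` (C::pt set))"
  by (rule convex_linear_image[OF linear_uminus])

lemma chain_data:
  assumes "finite P" "P \<noteq> {}"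
  shows "chainok (upper_chain P)" "chainok (upper_chain (uminus ` P))"
    "upper_chain P ! 0 = leftmost P" "upper_chain P ! (length (upper_chain P) - 1) = rightmost P"
    "upper_chain (uminus ` P) ! 0 = - rightmost P"
    "upper_chain (uminus ` P) ! (length (upper_chain (uminus ` P)) - 1) = - leftmost P"
    "upper_chain P \<noteq> []" "upper_chain (uminus ` P) \<noteq> []"
    "set (upper_chain P) \<subseteq> P" "uminus ` set (upper_chain (uminus ` P)) \<subseteq> P"
    "length (upper_chain P) \<le> card P" "length (upper_chain (uminus ` P)) \<le> card P"
proof -
  have fn: "finite (uminus ` P)" "uminus ` P \<noteq> {}" using assms by auto
  show "chainok (upper_chain P)" by (rule uc_chainok[OF assms])
  show "chainok (upper_chain (uminus ` P))" by (rule uc_chainok[OF fn])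
  show "upper_chain P ! 0 = leftmost P" by (rule uc_basic(6)[OF assms])
  show "upper_chain P ! (length (upper_chain P) - 1) = rightmost P" by (rule uc_basic(7)[OF assms])
  show "upper_chain (uminus ` P) ! 0 = - rightmost P"
    using uc_basic(6)[OF fn] lm_neg[OF assms] by simp
  show "upper_chain (uminus ` P) ! (length (upper_chain (uminus ` P)) - 1) = - leftmost P"
    using uc_basic(7)[OF fn] rm_neg[OF assms] by simp
  show "upper_chain P \<noteq> []" by (rule uc_basic(5)[OF assms])
  show "upper_chain (uminus ` P) \<noteq> []" by (rule uc_basic(5)[OF fn])
  show s1: "set (upper_chain P) \<subseteq> P" by (rule uc_basic(2)[OF assms])
  show "uminus ` set (upper_chain (uminus ` P)) \<subseteq> P" by (rule uc_neg_sub[OF assms])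
  have "length (upper_chain P) = card (set (upper_chain P))"
    using distinct_card[OF uc_basic(8)[OF assms]] by simp
  also have "\<dots> \<le> card P" using s1 assms(1) by (rule card_mono[rotated])
  finally show "length (upper_chain P) \<le> card P" .
  have s2: "set (upper_chain (uminus ` P)) \<subseteq> uminus ` P" by (rule uc_basic(2)[OF fn])
  have "length (upper_chain (uminus ` P)) = card (set (upper_chain (uminus ` P)))"
    using distinct_card[OF uc_basic(8)[OF fn]] by simp
  also have "\<dots> \<le> card (uminus ` P)" using s2 fn(1) by (rule card_mono[rotated])
  also have "\<dots> \<le> card P" by (rule card_image_le[OF assms(1)])
  finally show "length (upper_chain (uminus ` P)) \<le> card P" .
qed

lemma init_in:
  assumes "find (\<lambda>q. q \<notin> C) (initq P) = None"
  shows "leftmost P \<in> C" "rightmost P \<in> C"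
proof -
  have "leftmost P \<in> set (initq P)" "rightmost P \<in> set (initq P)" unfolding initq_def by simp_all
  then show "leftmost P \<in> C" "rightmost P \<in> C" using find_NoneD'[OF assms] by blast+
qed

lemma nth_all_set: "(\<forall>t. 0 \<le> t \<and> t \<le> length w - 1 \<longrightarrow> w!t \<in> C) \<Longrightarrow> set w \<subseteq> C"
proof
  fix x assume a: "\<forall>t. 0 \<le> t \<and> t \<le> length w - 1 \<longrightarrow> w!t \<in> C" and x: "x \<in> set w"
  then obtain t where "t < length w" "w!t = x" by (auto simp: in_set_conv_nth)
  then show "x \<in> C" using a by (metis diff_Suc_1 le0 less_Suc_eq_le not_less0 Suc_pred gr_implies_not0 neq0_conv)
qed

lemma correct:
  assumes "convex C" "finite P" "P \<noteq> {}"
  shows "case snd (classify C P) of None \<Rightarrow> P \<subseteq> C | Some p \<Rightarrow> p \<in> P \<and> p \<notin> C"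
proof (cases "find (\<lambda>q. q \<notin> C) (initq P)")
  case (Some p)
  then have "p \<in> set (initq P)" "p \<notin> C" using find_SomeD' by fastforce+
  then show ?thesis using classify_a[OF Some] initq_sub[OF assms(2,3)] by auto
next
  case None
  note cd = chain_data[OF assms(2,3)]
  let ?w = "upper_chain P" and ?w' = "upper_chain (uminus ` P)"
  have vC: "leftmost P \<in> C" "rightmost P \<in> C" using init_in[OF None] by auto
  have U: "(snd (UR C P) = None \<longrightarrow> (\<forall>t. 1-1 \<le> t \<and> t \<le> length ?w - 1 \<longrightarrow> ?w!t \<in> C)) \<and>
    (\<forall>p. snd (UR C P) = Some p \<longrightarrow> p \<in> set ?w \<and> p \<notin> C)"
    unfolding UR_def by (rule rec_correct[OF cd(1) assms(1)]) (use cd vC in auto)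
  show ?thesis
  proof (cases "snd (UR C P)")
    case (Some p)
    then show ?thesis using classify_b[OF None Some] U cd(9) by auto
  next
    case N2: None
    have sw: "set ?w \<subseteq> C" using U N2 by (intro nth_all_set) simp
    have L: "(snd (LR C P) = None \<longrightarrow> (\<forall>t. 1-1 \<le> t \<and> t \<le> length ?w' - 1 \<longrightarrow> ?w'!t \<in> uminus ` C)) \<and>
      (\<forall>p. snd (LR C P) = Some p \<longrightarrow> p \<in> set ?w' \<and> p \<notin> uminus ` C)"
      unfolding LR_def UR_def by (rule rec_correct[OF cd(2) convex_neg[OF assms(1)]]) (use cd vC in auto)
    have cl: "snd (classify C P) = map_option uminus (snd (LR C P))" using classify_c[OF None N2] by simp
    show ?thesis
    proof (cases "snd (LR C P)")
      case (Some p)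
      then have "p \<in> set ?w'" "p \<notin> uminus ` C" using L by auto
      then have "- p \<in> P" "- p \<notin> C" using cd(10) by (auto simp: mem_neg_image)
      then show ?thesis using cl Some by simp
    next
      case N3: None
      have "set ?w' \<subseteq> uminus ` C" using L N3 by (intro nth_all_set) simp
      then have sw': "uminus ` set ?w' \<subseteq> C" by (auto simp: mem_neg_image)
      have "hull_vertices P \<subseteq> C" using hv_cover[OF assms(2,3)] sw sw' by blast
      then have "convex hull (hull_vertices P) \<subseteq> C" using assms(1) by (rule hull_minimal)
      then have "convex hull P \<subseteq> C" using hv_hull[OF assms(2)] by simp
      then have "P \<subseteq> C" using hull_subset[of P convex] by blast
      then show ?thesis using cl N3 by simp
    qed
  qed
qed



lemma cost_nat:
  fixes C P :: "pt set"
  assumes "convex C" "finite P" "P \<noteq> {}" "card P \<le> 2^h"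
  shows "length (fst (classify C P)) \<le> 12 + 12 * inner_fence_size C P * h"
proof -
  obtain V where V: "finite V" "card V = inner_fence_size C P" "convex hull V \<subseteq> C" "C \<inter> P = convex hull V \<inter> P"
    using fence_ex[OF assms(1,2)] by blast
  note cd = chain_data[OF assms(2,3)]
  let ?w = "upper_chain P" and ?w' = "upper_chain (uminus ` P)"
  let ?F = "inner_fence_size C P"
  show ?thesis
  proof (cases "find (\<lambda>q. q \<notin> C) (initq P)")
    case (Some p)
    then show ?thesis using classify_a[OF Some] initq_len[of P] by simp
  next
    case None
    have vC: "leftmost P \<in> C" "rightmost P \<in> C" using init_in[OF None] by auto
    have hyp1: "\<forall>t<length ?w. ?w!t \<in> C \<longrightarrow> ?w!t \<in> convex hull V"
    proof (intro allI impI)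
      fix t assume t: "t < length ?w" "?w!t \<in> C"
      then have "?w!t \<in> P" using cd(9) nth_mem by blast
      then show "?w!t \<in> convex hull V" using t(2) V(4) by blast
    qed
    have LU0: "length (fst (UR C P)) \<le> 3 + 6 * card (UU V ?w 1 (length ?w - 1)) * h"
      unfolding UR_def
      by (rule rec_cost[OF cd(1) V(3) hyp1 V(1)]) (use cd vC assms(4) in auto)
    have cu: "card (UU V ?w 1 (length ?w - 1)) \<le> ?F"
      unfolding V(2)[symmetric] using V(1) by (intro card_mono) (auto simp: UU_def)
    have "6 * card (UU V ?w 1 (length ?w - 1)) * h \<le> 6 * ?F * h" using cu by simp
    then have LU: "length (fst (UR C P)) \<le> 3 + 6 * ?F * h"
      using LU0 by (rule order.trans[OF _ add_left_mono, rotated])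
    have cV: "convex hull (uminus ` V) = uminus ` (convex hull V)"
      by (rule convex_hull_linear_image[symmetric]) (rule linear_uminus)
    have V3: "convex hull (uminus ` V) \<subseteq> uminus ` C" unfolding cV using V(3) by (rule image_mono)
    have hyp2: "\<forall>t<length ?w'. ?w'!t \<in> uminus ` C \<longrightarrow> ?w'!t \<in> convex hull (uminus ` V)"
    proof (intro allI impI)
      fix t assume t: "t < length ?w'" "?w'!t \<in> uminus ` C"
      then have "- (?w'!t) \<in> P" using cd(10) nth_mem by blast
      moreover have "- (?w'!t) \<in> C" using t(2) by (simp add: mem_neg_image)
      ultimately have "- (?w'!t) \<in> convex hull V" using V(4) by blast
      then show "?w'!t \<in> convex hull (uminus ` V)" unfolding cV by (simp add: mem_neg_image)
    qed
    have cardV': "card (uminus ` V) = card V" by (rule card_image) (simp add: inj_on_def)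
    have LL0: "length (fst (LR C P)) \<le> 3 + 6 * card (UU (uminus ` V) ?w' 1 (length ?w' - 1)) * h"
      unfolding LR_def UR_def
      by (rule rec_cost[OF cd(2) V3 hyp2]) (use cd vC assms(4) V(1) in \<open>auto simp: mem_neg_image\<close>)
    have cl: "card (UU (uminus ` V) ?w' 1 (length ?w' - 1)) \<le> ?F"
      unfolding V(2)[symmetric] cardV'[symmetric] using V(1) by (intro card_mono) (auto simp: UU_def)
    have "6 * card (UU (uminus ` V) ?w' 1 (length ?w' - 1)) * h \<le> 6 * ?F * h" using cl by simp
    then have LL: "length (fst (LR C P)) \<le> 3 + 6 * ?F * h"
      using LL0 by (rule order.trans[OF _ add_left_mono, rotated])
    show ?thesis
    proof (cases "snd (UR C P)")
      case (Some p)
      then show ?thesis using classify_b[OF None Some] initq_len[of P] LU by simp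
    next
      case N2: None
      then show ?thesis using classify_c[OF None N2] initq_len[of P] LU LL by simp
    qed
  qed
qed

lemma cost:
  fixes C P :: "pt set"
  assumes "convex C" "finite P" "P \<noteq> {}"
  shows "real (length (fst (classify C P))) \<le> 12 * (real (inner_fence_size C P) + 1) * (log 2 (real (card P)) + 1)"
proof -
  have "card P \<ge> 1" using assms(2,3) by (simp add: Suc_leI card_gt_0_iff)
  then obtain h where h: "card P \<le> 2^h" "real h \<le> log 2 (real (card P)) + 1" using log_h by blast
  have l0: "log 2 (real (card P)) \<ge> 0" using \<open>card P \<ge> 1\<close> by simp
  let ?F = "real (inner_fence_size C P)" and ?L = "log 2 (real (card P))"
  have "real (length (fst (classify C P))) \<le> real (12 + 12 * inner_fence_size C P * h)"
    using cost_nat[OF assms h(1)] by (simp only: of_nat_le_iff)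
  also have "\<dots> = 12 + 12 * ?F * real h" by simp
  also have "\<dots> \<le> 12 + 12 * ?F * (?L + 1)"
    using h(2) by (intro add_left_mono mult_left_mono) auto
  also have "\<dots> \<le> 12 * (?F + 1) * (?L + 1)"
    using l0 by (simp add: algebra_simps)
  finally show ?thesis .
qed

theorem lemma4p4:
  "\<exists>c::real. c > 0 \<and>
     (\<forall>C P. convex_body C \<and> finite P \<and> P \<noteq> {} \<longrightarrow>
        real (length (fst (classify C P)))
          \<le> c * (real (inner_fence_size C P) + 1) * (log 2 (real (card P)) + 1)
        \<and> (case snd (classify C P) of
             None \<Rightarrow> P \<subseteq> C
           | Some p \<Rightarrow> p \<in> P \<and> p \<notin> C))"
proof (intro exI[of _ 12] conjI allI impI)
  show "(12::real) > 0" by simp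
next
  fix C P :: "pt set" assume a: "convex_body C \<and> finite P \<and> P \<noteq> {}"
  then have c: "convex C" "finite P" "P \<noteq> {}" by (auto simp: convex_body_def)
  show "real (length (fst (classify C P))) \<le> 12 * (real (inner_fence_size C P) + 1) * (log 2 (real (card P)) + 1)"
    by (rule cost[OF c])
next
  fix C P :: "pt set" assume a: "convex_body C \<and> finite P \<and> P \<noteq> {}"
  then have c: "convex C" "finite P" "P \<noteq> {}" by (auto simp: convex_body_def)
  show "case snd (classify C P) of None \<Rightarrow> P \<subseteq> C | Some p \<Rightarrow> p \<in> P \<and> p \<notin> C"
    by (rule correct[OF c])
qed


end
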